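(* Let $A$ be a finite abelian group and $H$ a subgroup of $A$. Then $\Gamma_{A,H}$ admits a total perfect code if and only if, up to isomorphism (of $A$ carrying $H$ to the indicated subgroup), one of the following holds: (1) $A=\mathbb{Z}_2^n\times Q$ and $|H|=2$, where $n\ge 1$ and $Q$ is an abelian group of odd order; (2) $A=\mathbb{Z}_2^n\times\mathbb{Z}_{2^{k_1}}\times\cdots\times\mathbb{Z}_{2^{k_t}}\times Q$ with $n\ge1$, $t\ge 1$, $k_j\ge 2$ for all $j$, $Q$ an abelian group of odd order, and $H=\{0,(x_1,\dots,x_n,z_1,\dots,z_t,0)\}$ where each $x_i\in\{0,1\}$, each $z_j\in\{0,2^{k_j-1}\}$, and $x_l=1$ for at least one $l\in\{1,\dots,n\}$; (3) $A=\mathbb{Z}_2^n\times\mathbb{Z}_3$ with $n\ge 0$ and $H=\{0\}^n\times\mathbb{Z}_3=\{(0,\dots,0,0),(0,\dots,0,1),(0,\dots,0,2)\}$.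
   Context: Abelian groups are written additively with identity $0$. For a subgroup $H$ of a finite abelian group $A$, the subgroup sum graph $\Gamma_{A,H}$ is the simple undirected graph with vertex set $A$ in which distinct vertices $x,y$ are adjacent if and only if $x+y\in H\setminus\{0\}$. A total perfect code in a graph is a set $C$ of vertices such that every vertex of the graph (whether in $C$ or not) has exactly one neighbour in $C$. (The paper prints $z_j\in\{0,2^{k_j-2}\}$ in (2), which is a misprint: $H$ must be a subgroup of order $2$, forcing $z_j\in\{0,2^{k_j-1}\}$.) *)

theory Defs
  imports Main
begin

text \<open>A finite abelian group is modelled as a type of class finite and ab_group_add
  (the group is the whole type, written additively).\<close>

definition is_subgroup :: "'a::ab_group_add set \<Rightarrow> bool" where
  "is_subgroup H \<longleftrightarrow> 0 \<in> H \<and> (\<forall>x\<in>H. \<forall>y\<in>H. x + y \<in> H) \<and> (\<forall>x\<in>H. - x \<in> H)"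

definition ssg_adj :: "'a::ab_group_add set \<Rightarrow> 'a \<Rightarrow> 'a \<Rightarrow> bool" where
  "ssg_adj H x y \<longleftrightarrow> x \<noteq> y \<and> x + y \<in> H - {0}"

definition total_perfect_code :: "'a::ab_group_add set \<Rightarrow> 'a set \<Rightarrow> bool" where
  "total_perfect_code H C \<longleftrightarrow> (\<forall>v. \<exists>!c. c \<in> C \<and> ssg_adj H v c)"

text \<open>Concrete model of Z_{m_1} x ... x Z_{m_r}: lists of residues.\<close>
definition zvecs :: "nat list \<Rightarrow> nat list set" where
  "zvecs ms = {xs. length xs = length ms \<and> (\<forall>i<length ms. xs ! i < ms ! i)}"

definition zadd :: "nat list \<Rightarrow> nat list \<Rightarrow> nat list \<Rightarrow> nat list" where
  "zadd ms xs ys = map (\<lambda>i. (xs ! i + ys ! i) mod (ms ! i)) [0..<length ms]"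

text \<open>prod_iso ms Q \<phi>: the map (xs, q) \<mapsto> \<phi> xs + q is a group isomorphism from
  Z_{ms} x Q onto the whole group A, where Q is a subgroup of A (playing the role of the
  abstract factor Q, which is determined up to isomorphism).\<close>
definition prod_iso :: "nat list \<Rightarrow> 'a::ab_group_add set \<Rightarrow> (nat list \<Rightarrow> 'a) \<Rightarrow> bool" where
  "prod_iso ms Q \<phi> \<longleftrightarrow> is_subgroup Q
     \<and> (\<forall>xs\<in>zvecs ms. \<forall>ys\<in>zvecs ms. \<phi> (zadd ms xs ys) = \<phi> xs + \<phi> ys)
     \<and> bij_betw (\<lambda>(xs, q). \<phi> xs + q) (zvecs ms \<times> Q) UNIV"

end

theory Submission
  imports Defs "HOL-Computational_Algebra.Primes"
begin


fun nsm :: "nat \<Rightarrow> 'a::ab_group_add \<Rightarrow> 'a" where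
  "nsm 0 x = 0" | "nsm (Suc n) x = x + nsm n x"

lemma nsm_add: "nsm (m + n) x = nsm m x + nsm n x"
  by (induct m) (auto simp: algebra_simps)

lemma nsm_mult: "nsm (m * n) x = nsm m (nsm n x)"
  by (induct m) (auto simp: nsm_add)

lemma nsm_mult2: "nsm (m * n) x = nsm n (nsm m x)"
  by (metis mult.commute nsm_mult)

lemma nsm_plus: "nsm n (x + y) = nsm n x + nsm n y"
  by (induct n) (auto simp: algebra_simps)

lemma nsm_minus: "nsm n (- x) = - nsm n x"
  by (induct n) (auto simp: algebra_simps)

lemma nsm_diff: "nsm n (x - y) = nsm n x - nsm n y"
  using nsm_plus[of n x "-y"] nsm_minus[of n y] by simp

lemma nsm_zero[simp]: "nsm n 0 = 0"
  by (induct n) auto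

lemma nsm_1[simp]: "nsm 1 x = x" by simp
lemma nsm_2: "nsm 2 x = x + x" by (simp add: numeral_2_eq_2)

lemma nsm_mod: assumes "nsm m g = 0" shows "nsm (a mod m) g = nsm a g"
proof -
  have "nsm a g = nsm ((a div m) * m + a mod m) g" by (metis div_mult_mod_eq)
  also have "\<dots> = nsm (a mod m) g" by (simp only: nsm_add nsm_mult assms nsm_zero add_0)
  finally show ?thesis by simp
qed

lemma nsm_gcd: assumes "nsm r g = 0" "nsm s g = 0" shows "nsm (gcd r s) g = 0"
proof (cases "r = 0")
  case True then show ?thesis using assms by simp
next
  case False
  then obtain x y where "r * x = s * y + gcd r s" using bezout_nat by blast
  then have "nsm (r * x) g = nsm (s * y) g + nsm (gcd r s) g" by (simp add: nsm_add)
  then show ?thesis using assms by (simp add: nsm_mult2)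
qed

lemma subgroup_nsm: "is_subgroup H \<Longrightarrow> x \<in> H \<Longrightarrow> nsm n x \<in> H"
  by (induct n) (auto simp: is_subgroup_def)

lemma subgroup_diff: "is_subgroup H \<Longrightarrow> x \<in> H \<Longrightarrow> y \<in> H \<Longrightarrow> x - y \<in> H"
  unfolding is_subgroup_def by (metis diff_conv_add_uminus)

lemma exists_order: "\<exists>n>0. nsm n (x::'a::{finite,ab_group_add}) = 0"
proof -
  have "\<not> inj (\<lambda>n. nsm n x)"
  proof
    assume "inj (\<lambda>n. nsm n x)"
    then have "infinite (range (\<lambda>n. nsm n x))"
      using finite_imageD infinite_UNIV_nat by blast
    then show False by simp
  qed
  then obtain i j where ij: "i \<noteq> j" "nsm i x = nsm j x" unfolding inj_def by blast
  { fix i j assume "i < j" "nsm i x = nsm j x"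
    then have "nsm (j - i) x = 0" using nsm_add[of "j-i" i x] by simp
    then have "\<exists>n>0. nsm n x = 0" using \<open>i<j\<close> by (intro exI[of _ "j-i"]) auto }
  then show ?thesis using ij by (metis linorder_neqE_nat)
qed



lemma t1: fixes w h c :: "'a::ab_group_add" shows "c = -w \<Longrightarrow> c = w + h \<Longrightarrow> w + w = -h"
  by (metis add.commute add_diff_cancel_left' diff_minus_eq_add minus_add_distrib minus_diff_eq)
lemma t2: fixes w h c :: "'a::ab_group_add" shows "c = -w \<Longrightarrow> c = w - h \<Longrightarrow> w + w = h"
  by (metis add_diff_cancel_left' add_uminus_conv_diff diff_add_cancel minus_diff_eq)
lemma t3: "\<exists>!c. c \<in> C \<and> (c = x \<or> c = y) \<Longrightarrow> x \<noteq> y \<Longrightarrow> (x \<in> C) \<noteq> (y \<in> C)"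
  by blast

lemma code_forward:
  fixes H :: "'a::ab_group_add set"
  assumes sg: "is_subgroup H" and C: "total_perfect_code H C"
  shows "(\<exists>h. h \<noteq> 0 \<and> H = {0,h} \<and> (\<forall>v. v + v \<noteq> h))
       \<or> (\<exists>h. h \<noteq> 0 \<and> h + h + h = 0 \<and> H = {0, h, h+h} \<and> (\<forall>u. u + u \<in> H))"
proof -
  have U: "\<And>v. \<exists>!c. c \<in> C \<and> ssg_adj H v c" using C unfolding total_perfect_code_def by blast
  have H0: "0 \<in> H" and Hadd: "\<And>x y. x \<in> H \<Longrightarrow> y \<in> H \<Longrightarrow> x + y \<in> H"
    and Hneg: "\<And>x. x \<in> H \<Longrightarrow> -x \<in> H" using sg unfolding is_subgroup_def by auto
  have Hdiff: "\<And>x y. x \<in> H \<Longrightarrow> y \<in> H \<Longrightarrow> x - y \<in> H" using sg subgroup_diff by blast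
  obtain c0 where c0: "c0 \<in> C" "ssg_adj H 0 c0" using U[of 0] by blast
  have c0H: "c0 \<in> H" "c0 \<noteq> 0" using c0 unfolding ssg_adj_def by auto
  have uniq0: "c = c0" if "c \<in> C" "c \<in> H" "c \<noteq> 0" for c
  proof -
    have "ssg_adj H 0 c" using that unfolding ssg_adj_def by simp
    then show ?thesis using U[of 0] c0 that(1) by blast
  qed
  obtain c1 where c1: "c1 \<in> C" "ssg_adj H c0 c1" using U[of c0] by blast
  have c1H: "c1 \<in> H" using c1 c0H Hdiff[of "c0 + c1" c0] unfolding ssg_adj_def by simp
  have "c1 = 0" using uniq0[OF c1(1) c1H] c1 unfolding ssg_adj_def by blast
  then have C0: "0 \<in> C" using c1 by simp
  have Hsub: "H \<subseteq> {0, c0, -c0}"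
  proof
    fix v assume v: "v \<in> H"
    show "v \<in> {0, c0, -c0}"
    proof (rule ccontr)
      assume nv: "v \<notin> {0, c0, -c0}"
      have a1: "ssg_adj H v 0" using v nv unfolding ssg_adj_def by auto
      have "v + c0 \<noteq> 0" using nv by (simp add: add_eq_0_iff2)
      then have a2: "ssg_adj H v c0" using v nv c0H Hadd unfolding ssg_adj_def by auto
      show False using U[of v] a1 a2 C0 c0(1) c0H by blast
    qed
  qed
  have c0in: "c0 \<in> H" "-c0 \<in> H" using c0H Hneg by auto
  show ?thesis
  proof (cases "c0 = - c0")
    case True
    then have HH: "H = {0, c0}" using Hsub H0 c0in by auto
    have "\<forall>v. v + v \<noteq> c0"
    proof (intro allI notI)
      fix v assume vv: "v + v = c0"
      obtain c where c: "c \<in> C" "ssg_adj H v c" using U[of v] by blast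
      then have "v + c = c0" using HH unfolding ssg_adj_def by auto
      then have "c = v" using vv by (metis add_left_imp_eq)
      then show False using c unfolding ssg_adj_def by auto
    qed
    then show ?thesis using HH c0H by blast
  next
    case False
    define h where "h = c0"
    have hn0: "h \<noteq> 0" and hneg: "h \<noteq> - h" using c0H False h_def by auto
    have hh: "h + h = - h"
    proof -
      have "h + h \<in> H" using Hadd c0in h_def by auto
      moreover have "h + h \<noteq> 0" using hneg by (simp add: add_eq_0_iff2)
      moreover have "h + h \<noteq> h" using hn0 by simp
      ultimately show ?thesis using Hsub h_def by auto
    qed
    have h3: "h + h + h = 0" using hh by simp
    have HH: "H = {0, h, - h}" using Hsub H0 c0in h_def by auto
    have Hm0: "H - {0} = {h, - h}" using HH hn0 by auto
    have "\<forall>u. u + u \<in> H"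
    proof (rule ccontr)
      assume "\<not> (\<forall>u. u + u \<in> H)"
      then obtain u where u: "u + u \<notin> H" by blast
      have hH: "h \<in> H" "- h \<in> H" using HH by auto
      have ww: "w + w \<notin> H" if w: "w \<in> {u, u + h, u - h}" for w
      proof
        assume wH: "w + w \<in> H"
        have e1: "(u + h) + (u + h) = (u + u) + (h + h)" "(u - h) + (u - h) = (u + u) - (h + h)"
          by (simp_all add: algebra_simps)
        have "w + w = u + u \<or> w + w = (u + u) + (- h) \<or> w + w = (u + u) - (- h)"
          using w e1 hh by auto
        then have "u + u = w + w \<or> u + u = (w + w) - (- h) \<or> u + u = (w + w) + (- h)"
          by (auto simp: algebra_simps)
        then show False using u wH hH Hadd Hdiff by metis
      qed
      have neigh: "ssg_adj H (-w) c \<longleftrightarrow> c = w + h \<or> c = w - h" if w: "w \<in> {u, u + h, u - h}" for w c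
      proof
        assume "ssg_adj H (-w) c"
        then have "-w + c = h \<or> -w + c = - h" using Hm0 unfolding ssg_adj_def by auto
        then show "c = w + h \<or> c = w - h" by (auto simp: algebra_simps)
      next
        assume cc: "c = w + h \<or> c = w - h"
        have "-w + c = h \<or> -w + c = - h" using cc by (auto simp: algebra_simps)
        moreover have "c \<noteq> -w"
        proof
          assume "c = -w"
          then have "w + w = - h \<or> w + w = h" using cc t1 t2 by blast
          then show False using ww[OF w] hH by auto
        qed
        ultimately show "ssg_adj H (-w) c" using Hm0 unfolding ssg_adj_def by auto
      qed
      have ex1: "(x \<in> C) \<noteq> (y \<in> C)" if "\<exists>!c. c \<in> C \<and> (c = x \<or> c = y)" "x \<noteq> y" for x y
        using that t3 by metis
      have r1: "u + h + h = u - h" "u - h - h = u + h" using hh by (simp_all add: algebra_simps)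
      have dist: "u + h \<noteq> u - h" "u \<noteq> u + h" "u \<noteq> u - h" using hn0 hneg by auto
      have x: "(w + h \<in> C) \<noteq> (w - h \<in> C)" if w: "w \<in> {u, u + h, u - h}" for w
      proof (rule ex1)
        have "\<And>c. ssg_adj H (-w) c \<longleftrightarrow> (c = w + h \<or> c = w - h)" using neigh[OF w] by blast
        then show "\<exists>!c. c \<in> C \<and> (c = w + h \<or> c = w - h)" using U[of "-w"] by simp
        show "w + h \<noteq> w - h" using hneg by simp
      qed
      have x1: "(u + h \<in> C) \<noteq> (u - h \<in> C)" using x[of u] by simp
      have x2: "(u - h \<in> C) \<noteq> (u \<in> C)" using x[of "u + h"] r1 by simp
      have x3: "(u \<in> C) \<noteq> (u + h \<in> C)" using x[of "u - h"] r1 by simp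
      show False using x1 x2 x3 by blast
    qed
    moreover have "H = {0, h, h + h}" using HH hh by simp
    ultimately have "h \<noteq> 0 \<and> h + h + h = 0 \<and> H = {0, h, h+h} \<and> (\<forall>u. u + u \<in> H)"
      using hn0 h3 by simp
    then show ?thesis by blast
  qed
qed



lemma code_cond2:
  fixes H :: "'a::ab_group_add set"
  assumes "h \<noteq> 0" "H = {0, h}" "\<forall>v. v + v \<noteq> h"
  shows "total_perfect_code H UNIV"
  unfolding total_perfect_code_def
proof
  fix v :: 'a
  have adj: "ssg_adj H v c \<longleftrightarrow> c = h - v" for c
  proof
    assume "ssg_adj H v c" then have "v + c = h" using assms unfolding ssg_adj_def by auto
    then show "c = h - v" by (metis add_diff_cancel_left')
  next
    assume c: "c = h - v"
    have "v \<noteq> c" using assms(3) c by (metis add_diff_cancel_left' diff_add_cancel add.commute)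
    moreover have "v + c = h" using c by simp
    ultimately show "ssg_adj H v c" using assms unfolding ssg_adj_def by auto
  qed
  show "\<exists>!c. c \<in> UNIV \<and> ssg_adj H v c" using adj by (intro ex1I[of _ "h - v"]) auto
qed

lemma exu_shift: "(\<exists>!s. P (s::'a::ab_group_add)) \<Longrightarrow> (\<exists>!c. P (v + c))"
proof -
  assume "\<exists>!s. P s"
  then obtain s where s: "P s" "\<And>t. P t \<Longrightarrow> t = s" unfolding Ex1_def by metis
  show "\<exists>!c. P (v + c)"
  proof (rule ex1I[of _ "s - v"])
    show "P (v + (s - v))" using s(1) by simp
    fix c assume "P (v + c)" then have "v + c = s" by (rule s(2))
    then show "c = s - v" by (metis add_diff_cancel_left')
  qed
qed

lemma code_cond3:
  fixes H :: "'a::ab_group_add set"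
  assumes h0: "h \<noteq> 0" and h3: "h + h + h = 0" and HH: "H = {0, h, h + h}" and all: "\<forall>u. u + u \<in> H"
  shows "total_perfect_code H {u. u + u = 0 \<or> u + u = h + h}"
  unfolding total_perfect_code_def
proof
  fix v :: 'a
  define C where "C = {u. u + u = 0 \<or> u + u = h + h}"
  have hh0: "h + h \<noteq> 0"
  proof
    assume a: "h + h = 0"
    have "h + h + h = h" using a by simp
    then show False using h3 h0 by simp
  qed
  have hhh: "h + h \<noteq> h" using h0 by simp
  have "(h + h) + (h + h) = (h + h + h) + h" by (simp add: add.assoc)
  then have X1: "(h + h) + (h + h) = h" using h3 by simp
  have X2: "(h + h) + (h + h) - h = 0" using X1 by simp
  define P where "P s \<longleftrightarrow> s \<in> {h, h + h} \<and> s \<noteq> v + v \<and> (s + s - (v + v) \<in> {0, h + h})" for s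
  have key: "(c \<in> C \<and> ssg_adj H v c) \<longleftrightarrow> P (v + c)" for c
  proof -
    have e1: "c + c = (v + c) + (v + c) - (v + v)" by (simp add: algebra_simps)
    have e2: "c \<noteq> v \<longleftrightarrow> v + c \<noteq> v + v" by simp
    have e3: "H - {0} = {h, h + h}" using HH h0 hh0 by auto
    show ?thesis unfolding C_def P_def ssg_adj_def e3 using e1 e2 by auto
  qed
  have "\<exists>!s. P s"
  proof -
    have r: "v + v = 0 \<or> v + v = h \<or> v + v = h + h" using all HH by auto
    then show ?thesis
    proof (elim disjE)
      assume r: "v + v = 0"
      show ?thesis unfolding P_def r using h0 hh0 hhh by (intro ex1I[of _ h]) (auto simp: X1)
    next
      assume r: "v + v = h"
      show ?thesis unfolding P_def r using h0 hh0 hhh by (intro ex1I[of _ "h + h"]) (auto simp: X1 X2)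
    next
      assume r: "v + v = h + h"
      show ?thesis unfolding P_def r using h0 hh0 hhh by (intro ex1I[of _ h]) (auto simp: X1)
    qed
  qed
  then have "\<exists>!c. P (v + c)" by (rule exu_shift)
  then show "\<exists>!c. c \<in> {u. u + u = 0 \<or> u + u = h + h} \<and> ssg_adj H v c"
    using key unfolding C_def by simp
qed



definition lincomb :: "'a::ab_group_add list \<Rightarrow> nat list \<Rightarrow> 'a" where
  "lincomb gs xs = (\<Sum>i<length gs. nsm (xs ! i) (gs ! i))"

definition is_basis :: "'a::ab_group_add list \<Rightarrow> nat list \<Rightarrow> 'a set \<Rightarrow> bool" where
  "is_basis gs ms G \<longleftrightarrow> length gs = length ms \<and> (\<forall>i<length ms. nsm (ms ! i) (gs ! i) = 0)
     \<and> bij_betw (lincomb gs) (zvecs ms) G"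

lemma zvecs_Nil: "zvecs [] = {[]}"
  unfolding zvecs_def by auto

lemma zvecs_single: "zvecs [m] = {[j] | j. j < m}"
proof -
  have "xs \<in> zvecs [m] \<longleftrightarrow> (\<exists>j. xs = [j] \<and> j < m)" for xs
  proof
    assume "xs \<in> zvecs [m]"
    then have "length xs = 1" "xs ! 0 < m" unfolding zvecs_def by auto
    then show "\<exists>j. xs = [j] \<and> j < m"
      by (metis One_nat_def length_0_conv length_Suc_conv nth_Cons_0)
  next
    assume "\<exists>j. xs = [j] \<and> j < m" then show "xs \<in> zvecs [m]" unfolding zvecs_def by auto
  qed
  then show ?thesis by blast
qed

lemma zvecs_length: "xs \<in> zvecs ms \<Longrightarrow> length xs = length ms"
  unfolding zvecs_def by simp

lemma zvecs_nth: "xs \<in> zvecs ms \<Longrightarrow> i < length ms \<Longrightarrow> xs ! i < ms ! i"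
  unfolding zvecs_def by simp

lemma zvecs_append: "length a = length ms1 \<Longrightarrow> (a @ b \<in> zvecs (ms1 @ ms2) \<longleftrightarrow> a \<in> zvecs ms1 \<and> b \<in> zvecs ms2)"
proof
  assume l: "length a = length ms1" and ab: "a @ b \<in> zvecs (ms1 @ ms2)"
  have lb: "length b = length ms2" using ab l unfolding zvecs_def by simp
  have "\<forall>i<length ms1. a ! i < ms1 ! i"
  proof (intro allI impI)
    fix i assume i: "i < length ms1"
    have "(a @ b) ! i < (ms1 @ ms2) ! i" using ab i unfolding zvecs_def by simp
    then show "a ! i < ms1 ! i" using i l by (simp add: nth_append)
  qed
  moreover have "\<forall>i<length ms2. b ! i < ms2 ! i"
  proof (intro allI impI)
    fix i assume i: "i < length ms2"
    have all: "\<forall>j<length (ms1 @ ms2). (a @ b) ! j < (ms1 @ ms2) ! j" using ab unfolding zvecs_def by simp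
    have "(a @ b) ! (length ms1 + i) < (ms1 @ ms2) ! (length ms1 + i)" using spec[OF all, of "length ms1 + i"] i by simp
    then show "b ! i < ms2 ! i" using i l by (simp add: nth_append)
  qed
  ultimately show "a \<in> zvecs ms1 \<and> b \<in> zvecs ms2" using l lb unfolding zvecs_def by simp
next
  assume l: "length a = length ms1" and ab: "a \<in> zvecs ms1 \<and> b \<in> zvecs ms2"
  show "a @ b \<in> zvecs (ms1 @ ms2)" unfolding zvecs_def
  proof (intro CollectI conjI allI impI)
    show "length (a @ b) = length (ms1 @ ms2)" using ab unfolding zvecs_def by simp
    fix i assume i: "i < length (ms1 @ ms2)"
    show "(a @ b) ! i < (ms1 @ ms2) ! i"
    proof (cases "i < length ms1")
      case True then show ?thesis using ab l unfolding zvecs_def by (simp add: nth_append)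
    next
      case False then show ?thesis using ab l i unfolding zvecs_def by (simp add: nth_append)
    qed
  qed
qed

lemma lincomb_append:
  assumes "length xs1 = length gs1"
  shows "lincomb (gs1 @ gs2) (xs1 @ xs2) = lincomb gs1 xs1 + lincomb gs2 xs2"
proof -
  let ?f = "\<lambda>i. nsm ((xs1 @ xs2) ! i) ((gs1 @ gs2) ! i)"
  let ?n = "length gs1" let ?m = "length gs2"
  have "lincomb (gs1 @ gs2) (xs1 @ xs2) = sum ?f {0..<?n + ?m}"
    unfolding lincomb_def by (simp add: lessThan_atLeast0)
  also have "\<dots> = sum ?f {0..<?n} + sum ?f {?n..<?n + ?m}"
    by (rule sum.atLeastLessThan_concat[symmetric]) auto
  also have "sum ?f {0..<?n} = lincomb gs1 xs1"
    unfolding lincomb_def lessThan_atLeast0 using assms by (intro sum.cong) (auto simp: nth_append)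
  also have "sum ?f {?n..<?n + ?m} = sum (\<lambda>i. ?f (i + ?n)) {0..<?m}"
    using sum.shift_bounds_nat_ivl[of ?f 0 ?n ?m] by (simp add: add.commute)
  also have "\<dots> = lincomb gs2 xs2"
    unfolding lincomb_def lessThan_atLeast0 using assms by (intro sum.cong) (auto simp: nth_append)
  finally show ?thesis .
qed

lemma lincomb_single: "lincomb [g] [j] = nsm j g"
  unfolding lincomb_def by simp

lemma lincomb_Nil: "lincomb [] xs = 0"
  unfolding lincomb_def by simp

lemma lincomb_zeros: "length gs \<le> n \<Longrightarrow> lincomb gs (replicate n 0) = 0"
  unfolding lincomb_def by (intro sum.neutral) (auto simp: nth_replicate)

lemma zadd_length: "length (zadd ms xs ys) = length ms"
  unfolding zadd_def by simp

lemma zadd_nth: "i < length ms \<Longrightarrow> zadd ms xs ys ! i = (xs ! i + ys ! i) mod (ms ! i)"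
  unfolding zadd_def by simp

lemma zadd_zvecs: "(\<forall>m\<in>set ms. m > 0) \<Longrightarrow> zadd ms xs ys \<in> zvecs ms"
  unfolding zvecs_def by (auto simp: zadd_length zadd_nth)

lemma lincomb_zadd:
  assumes "length gs = length ms" "\<forall>i<length ms. nsm (ms ! i) (gs ! i) = 0"
  shows "lincomb gs (zadd ms xs ys) = lincomb gs xs + lincomb gs ys"
  unfolding lincomb_def
proof -
  have "(\<Sum>i<length gs. nsm (zadd ms xs ys ! i) (gs ! i))
      = (\<Sum>i<length gs. nsm (xs ! i) (gs ! i) + nsm (ys ! i) (gs ! i))"
  proof (rule sum.cong)
    fix i assume "i \<in> {..<length gs}"
    then have i: "i < length ms" using assms by simp
    have "nsm (zadd ms xs ys ! i) (gs ! i) = nsm ((xs ! i + ys ! i) mod (ms ! i)) (gs ! i)"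
      using i by (simp add: zadd_nth)
    also have "\<dots> = nsm (xs ! i + ys ! i) (gs ! i)" using assms i by (intro nsm_mod) simp
    finally show "nsm (zadd ms xs ys ! i) (gs ! i) = nsm (xs ! i) (gs ! i) + nsm (ys ! i) (gs ! i)"
      by (simp add: nsm_add)
  qed simp
  then show "(\<Sum>i<length gs. nsm (zadd ms xs ys ! i) (gs ! i)) =
    (\<Sum>i<length gs. nsm (xs ! i) (gs ! i)) + (\<Sum>i<length gs. nsm (ys ! i) (gs ! i))"
    by (simp add: sum.distrib)
qed



lemma zvecs_split:
  assumes "xs \<in> zvecs (ms1 @ ms2)"
  shows "take (length ms1) xs \<in> zvecs ms1" "drop (length ms1) xs \<in> zvecs ms2"
proof -
  have l: "length (take (length ms1) xs) = length ms1" using zvecs_length[OF assms] by simp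
  have "take (length ms1) xs @ drop (length ms1) xs \<in> zvecs (ms1 @ ms2)" using assms by simp
  then show "take (length ms1) xs \<in> zvecs ms1" "drop (length ms1) xs \<in> zvecs ms2"
    using zvecs_append[OF l] by blast+
qed

lemma lincomb_split:
  assumes "xs \<in> zvecs (ms1 @ ms2)" "length gs1 = length ms1"
  shows "lincomb (gs1 @ gs2) xs = lincomb gs1 (take (length ms1) xs) + lincomb gs2 (drop (length ms1) xs)"
proof -
  have l: "length (take (length ms1) xs) = length gs1" using zvecs_length[OF assms(1)] assms(2) by simp
  show ?thesis using lincomb_append[OF l, of gs2 "drop (length ms1) xs"] by simp
qed

lemma basis_image: "is_basis gs ms G \<Longrightarrow> xs \<in> zvecs ms \<Longrightarrow> lincomb gs xs \<in> G"
  unfolding is_basis_def bij_betw_def by blast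

lemma basis_surj: "is_basis gs ms G \<Longrightarrow> x \<in> G \<Longrightarrow> \<exists>xs\<in>zvecs ms. x = lincomb gs xs"
  unfolding is_basis_def bij_betw_def by blast

lemma basis_inj: "is_basis gs ms G \<Longrightarrow> xs \<in> zvecs ms \<Longrightarrow> ys \<in> zvecs ms \<Longrightarrow> lincomb gs xs = lincomb gs ys \<Longrightarrow> xs = ys"
  unfolding is_basis_def bij_betw_def inj_on_def by blast

lemma basis_append:
  assumes B1: "is_basis gs1 ms1 G1" and B2: "is_basis gs2 ms2 G2"
    and sg1: "is_subgroup G1" and sg2: "is_subgroup G2" and int: "G1 \<inter> G2 = {0}"
  shows "is_basis (gs1 @ gs2) (ms1 @ ms2) {a + b | a b. a \<in> G1 \<and> b \<in> G2}"
proof -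
  have l1: "length gs1 = length ms1" and l2: "length gs2 = length ms2"
    and o1: "\<forall>i<length ms1. nsm (ms1 ! i) (gs1 ! i) = 0" and o2: "\<forall>i<length ms2. nsm (ms2 ! i) (gs2 ! i) = 0"
    using B1 B2 unfolding is_basis_def by auto
  have ord: "\<forall>i<length (ms1 @ ms2). nsm ((ms1 @ ms2) ! i) ((gs1 @ gs2) ! i) = 0"
  proof (intro allI impI)
    fix i assume i: "i < length (ms1 @ ms2)"
    show "nsm ((ms1 @ ms2) ! i) ((gs1 @ gs2) ! i) = 0"
    proof (cases "i < length ms1")
      case True then show ?thesis using o1 l1 by (simp add: nth_append)
    next
      case False
      then have "i - length ms1 < length ms2" using i by simp
      then show ?thesis using o2 l1 False by (simp add: nth_append)
    qed
  qed
  let ?n = "length ms1"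
  have img: "lincomb (gs1 @ gs2) ` zvecs (ms1 @ ms2) = {a + b | a b. a \<in> G1 \<and> b \<in> G2}"
  proof
    show "lincomb (gs1 @ gs2) ` zvecs (ms1 @ ms2) \<subseteq> {a + b | a b. a \<in> G1 \<and> b \<in> G2}"
    proof
      fix y assume "y \<in> lincomb (gs1 @ gs2) ` zvecs (ms1 @ ms2)"
      then obtain xs where xs: "xs \<in> zvecs (ms1 @ ms2)" "y = lincomb (gs1 @ gs2) xs" by blast
      have "lincomb gs1 (take ?n xs) \<in> G1" using basis_image[OF B1 zvecs_split(1)[OF xs(1)]] .
      moreover have "lincomb gs2 (drop ?n xs) \<in> G2" using basis_image[OF B2 zvecs_split(2)[OF xs(1)]] .
      ultimately show "y \<in> {a + b | a b. a \<in> G1 \<and> b \<in> G2}" using lincomb_split[OF xs(1) l1] xs(2) by blast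
    qed
  next
    show "{a + b | a b. a \<in> G1 \<and> b \<in> G2} \<subseteq> lincomb (gs1 @ gs2) ` zvecs (ms1 @ ms2)"
    proof
      fix y assume "y \<in> {a + b | a b. a \<in> G1 \<and> b \<in> G2}"
      then obtain a b where ab: "a \<in> G1" "b \<in> G2" "y = a + b" by blast
      obtain x1 where x1: "x1 \<in> zvecs ms1" "a = lincomb gs1 x1" using basis_surj[OF B1 ab(1)] by blast
      obtain x2 where x2: "x2 \<in> zvecs ms2" "b = lincomb gs2 x2" using basis_surj[OF B2 ab(2)] by blast
      have lx1: "length x1 = length ms1" using zvecs_length[OF x1(1)] .
      have "x1 @ x2 \<in> zvecs (ms1 @ ms2)" using zvecs_append[OF lx1] x1 x2 by blast
      moreover have "lincomb (gs1 @ gs2) (x1 @ x2) = y" using lincomb_append[of x1 gs1 gs2 x2] lx1 l1 x1 x2 ab by simp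
      ultimately show "y \<in> lincomb (gs1 @ gs2) ` zvecs (ms1 @ ms2)" by (metis image_eqI)
    qed
  qed
  have inj: "inj_on (lincomb (gs1 @ gs2)) (zvecs (ms1 @ ms2))"
  proof (rule inj_onI)
    fix xs ys assume xs: "xs \<in> zvecs (ms1 @ ms2)" and ys: "ys \<in> zvecs (ms1 @ ms2)"
      and eq: "lincomb (gs1 @ gs2) xs = lincomb (gs1 @ gs2) ys"
    define a1 where "a1 = lincomb gs1 (take ?n xs)"
    define a2 where "a2 = lincomb gs1 (take ?n ys)"
    define b1 where "b1 = lincomb gs2 (drop ?n xs)"
    define b2 where "b2 = lincomb gs2 (drop ?n ys)"
    have a1G: "a1 \<in> G1" unfolding a1_def using basis_image[OF B1 zvecs_split(1)[OF xs]] .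
    have a2G: "a2 \<in> G1" unfolding a2_def using basis_image[OF B1 zvecs_split(1)[OF ys]] .
    have b1G: "b1 \<in> G2" unfolding b1_def using basis_image[OF B2 zvecs_split(2)[OF xs]] .
    have b2G: "b2 \<in> G2" unfolding b2_def using basis_image[OF B2 zvecs_split(2)[OF ys]] .
    have "a1 + b1 = a2 + b2" using eq lincomb_split[OF xs l1] lincomb_split[OF ys l1]
      unfolding a1_def a2_def b1_def b2_def by simp
    then have e: "a1 - a2 = b2 - b1" by (simp add: algebra_simps)
    have "a1 - a2 \<in> G1" using subgroup_diff[OF sg1 a1G a2G] .
    moreover have "b2 - b1 \<in> G2" using subgroup_diff[OF sg2 b2G b1G] .
    ultimately have "a1 - a2 \<in> G1 \<inter> G2" using e by simp
    then have "a1 - a2 = 0" using int by blast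
    then have ea: "a1 = a2" and eb: "b1 = b2" using e by simp_all
    have "take ?n xs = take ?n ys"
      using basis_inj[OF B1 zvecs_split(1)[OF xs] zvecs_split(1)[OF ys]] ea unfolding a1_def a2_def by simp
    moreover have "drop ?n xs = drop ?n ys"
      using basis_inj[OF B2 zvecs_split(2)[OF xs] zvecs_split(2)[OF ys]] eb unfolding b1_def b2_def by simp
    ultimately show "xs = ys" by (metis append_take_drop_id)
  qed
  show ?thesis unfolding is_basis_def bij_betw_def using l1 l2 ord img inj by simp
qed

lemma basis_empty: "is_basis [] [] {0}"
  unfolding is_basis_def bij_betw_def zvecs_Nil by (simp add: lincomb_Nil)

lemma basis_single:
  assumes m: "m > 0" "nsm m g = 0" and ex: "\<And>j. 0 < j \<Longrightarrow> j < m \<Longrightarrow> nsm j g \<noteq> 0"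
  shows "is_basis [g] [m] (range (\<lambda>j. nsm j g))"
proof -
  have img: "lincomb [g] ` zvecs [m] = range (\<lambda>j. nsm j g)"
  proof
    show "lincomb [g] ` zvecs [m] \<subseteq> range (\<lambda>j. nsm j g)"
      unfolding zvecs_single by (auto simp: lincomb_single)
    show "range (\<lambda>j. nsm j g) \<subseteq> lincomb [g] ` zvecs [m]"
    proof
      fix y assume "y \<in> range (\<lambda>j. nsm j g)"
      then obtain j where j: "y = nsm j g" by blast
      have "y = lincomb [g] [j mod m]" using j nsm_mod[OF m(2)] by (simp add: lincomb_single)
      moreover have "[j mod m] \<in> zvecs [m]" unfolding zvecs_single using m by auto
      ultimately show "y \<in> lincomb [g] ` zvecs [m]" by blast
    qed
  qed
  have inj: "inj_on (lincomb [g]) (zvecs [m])"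
  proof (rule inj_onI)
    fix xs ys assume "xs \<in> zvecs [m]" "ys \<in> zvecs [m]" and eq: "lincomb [g] xs = lincomb [g] ys"
    then obtain i j where ij: "xs = [i]" "ys = [j]" "i < m" "j < m" unfolding zvecs_single by blast
    have e: "nsm i g = nsm j g" using eq ij by (simp add: lincomb_single)
    have "i = j"
    proof (rule ccontr)
      assume "i \<noteq> j"
      then consider "i < j" | "j < i" by linarith
      then show False
      proof cases
        case 1
        then have "nsm (j - i) g = 0" using e nsm_add[of "j - i" i g] by simp
        then show False using ex[of "j - i"] 1 ij by simp
      next
        case 2
        then have "nsm (i - j) g = 0" using e nsm_add[of "i - j" j g] by simp
        then show False using ex[of "i - j"] 2 ij by simp
      qed
    qed
    then show "xs = ys" using ij by simp
  qed
  show ?thesis unfolding is_basis_def bij_betw_def using img inj m by simp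
qed



lemma nsm_dvd_zero: "d dvd n \<Longrightarrow> nsm d g = 0 \<Longrightarrow> nsm n g = 0"
  by (metis dvd_def nsm_mult2 nsm_zero)

lemma ord_dvd:
  assumes gk: "nsm (2^k) g = 0" and k: "0 < k" and gk1: "nsm (2^(k-1)) g \<noteq> 0" and j: "nsm j g = 0"
  shows "(2::nat)^k dvd j"
proof (rule ccontr)
  assume nd: "\<not> (2::nat)^k dvd j"
  define r where "r = j mod 2^k"
  have r0: "r \<noteq> 0" using nd unfolding r_def by (simp add: mod_eq_0_iff_dvd)
  have rl: "r < 2^k" unfolding r_def by simp
  have nr: "nsm r g = 0" unfolding r_def using nsm_mod[OF gk] j by simp
  define d where "d = gcd r (2^k)"
  have nd0: "nsm d g = 0" unfolding d_def using nsm_gcd[OF nr gk] .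
  have "d dvd 2^k" unfolding d_def by simp
  then obtain i where i: "i \<le> k" "d = 2^i" using divides_primepow_nat[of 2 d k] by auto
  have "d \<le> r" unfolding d_def using r0 by (simp add: dvd_imp_le)
  then have lt: "(2::nat)^i < 2^k" using i(2) rl by linarith
  have "i < k" using power_less_imp_less_exp[of "2::nat" i k] lt by simp
  then have "(2::nat)^i dvd 2^(k-1)" by (intro le_imp_power_dvd) simp
  then have "nsm (2^(k-1)) g = 0" using nsm_dvd_zero nd0 i by metis
  then show False using gk1 by simp
qed

lemma cyc_subgroup: "is_subgroup (range (\<lambda>j. nsm j (g::'a::{finite,ab_group_add})))"
proof -
  obtain m where m: "m > 0" "nsm m g = 0" using exists_order by blast
  have neg: "- nsm j g = nsm ((m - 1) * j) g" for j
  proof -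
    have "nsm ((m - 1) * j) g + nsm j g = nsm ((m - 1) * j + j) g" by (simp add: nsm_add)
    also have "(m - 1) * j + j = m * j" using m by (cases m) auto
    also have "nsm (m * j) g = 0" by (simp add: nsm_mult2 m)
    finally show ?thesis by (metis add_eq_0_iff2)
  qed
  show ?thesis unfolding is_subgroup_def
  proof (intro conjI ballI)
    show "0 \<in> range (\<lambda>j. nsm j g)" by (metis nsm.simps(1) rangeI)
  next
    fix x y assume "x \<in> range (\<lambda>j. nsm j g)" "y \<in> range (\<lambda>j. nsm j g)"
    then obtain i j where "x = nsm i g" "y = nsm j g" by blast
    then show "x + y \<in> range (\<lambda>j. nsm j g)" by (metis nsm_add rangeI)
  next
    fix x assume "x \<in> range (\<lambda>j. nsm j g)"
    then obtain i where "x = nsm i g" by blast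
    then show "- x \<in> range (\<lambda>j. nsm j g)" using neg by (metis rangeI)
  qed
qed

lemma sum_subgroup:
  assumes "is_subgroup A" "is_subgroup B"
  shows "is_subgroup {a + b | a b. a \<in> A \<and> b \<in> B}"
  unfolding is_subgroup_def
proof (intro conjI ballI)
  show "0 \<in> {a + b | a b. a \<in> A \<and> b \<in> B}" using assms unfolding is_subgroup_def by force
next
  fix x y assume "x \<in> {a + b | a b. a \<in> A \<and> b \<in> B}" "y \<in> {a + b | a b. a \<in> A \<and> b \<in> B}"
  then obtain a1 b1 a2 b2 where ab: "x = a1 + b1" "y = a2 + b2" "a1 \<in> A" "a2 \<in> A" "b1 \<in> B" "b2 \<in> B" by blast
  have "x + y = (a1 + a2) + (b1 + b2)" using ab by (simp add: algebra_simps)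
  moreover have "a1 + a2 \<in> A" "b1 + b2 \<in> B" using ab assms unfolding is_subgroup_def by auto
  ultimately show "x + y \<in> {a + b | a b. a \<in> A \<and> b \<in> B}" by blast
next
  fix x assume "x \<in> {a + b | a b. a \<in> A \<and> b \<in> B}"
  then obtain a1 b1 where ab: "x = a1 + b1" "a1 \<in> A" "b1 \<in> B" by blast
  have "- x = (- a1) + (- b1)" using ab by (simp add: algebra_simps)
  moreover have "- a1 \<in> A" "- b1 \<in> B" using ab assms unfolding is_subgroup_def by auto
  ultimately show "- x \<in> {a + b | a b. a \<in> A \<and> b \<in> B}" by blast
qed



lemma complement_exists:
  fixes G :: "'a::{finite,ab_group_add} set"
  assumes sgG: "is_subgroup G" and gG: "g \<in> G" and k: "0 < k"
    and gk: "nsm (2^k) g = 0" and gk1: "nsm (2^(k-1)) g \<noteq> 0"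
    and allk: "\<forall>x\<in>G. nsm (2^k) x = 0"
  shows "\<exists>L. is_subgroup L \<and> L \<subseteq> G \<and> L \<inter> range (\<lambda>j. nsm j g) = {0}
           \<and> G = {a + l | a l. a \<in> range (\<lambda>j. nsm j g) \<and> l \<in> L}"
proof -
  define cyc where "cyc = range (\<lambda>j. nsm j g)"
  have sgc: "is_subgroup cyc" unfolding cyc_def by (rule cyc_subgroup)
  have cycG: "cyc \<subseteq> G" unfolding cyc_def using subgroup_nsm[OF sgG gG] by blast
  define S where "S = {L. is_subgroup L \<and> L \<subseteq> G \<and> L \<inter> cyc = {0}}"
  have z: "is_subgroup {0::'a}" unfolding is_subgroup_def by simp
  have zS: "{0} \<in> S" unfolding S_def using z sgG sgc unfolding is_subgroup_def by auto
  have fS: "finite (card ` S)" by simp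
  have neS: "card ` S \<noteq> {}" using zS by blast
  obtain L where LS: "L \<in> S" and Lc: "card L = Max (card ` S)" using Max_in[OF fS neS] by auto
  have Lmax: "card L' \<le> card L" if "L' \<in> S" for L'
    using Max_ge[OF fS] that Lc by simp
  have sgL: "is_subgroup L" and LG: "L \<subseteq> G" and Lint: "L \<inter> cyc = {0}" using LS unfolding S_def by auto
  define M where "M = {a + l | a l. a \<in> cyc \<and> l \<in> L}"
  have sgM: "is_subgroup M" unfolding M_def by (rule sum_subgroup[OF sgc sgL])
  have L0: "0 \<in> L" and c0: "0 \<in> cyc" using sgL sgc unfolding is_subgroup_def by auto
  have LM: "L \<subseteq> M" unfolding M_def using c0 by force
  have cM: "cyc \<subseteq> M" unfolding M_def using L0 by force
  have MG: "M \<subseteq> G"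
  proof
    fix x assume "x \<in> M"
    then obtain a l where "x = a + l" "a \<in> cyc" "l \<in> L" unfolding M_def by blast
    then show "x \<in> G" using cycG LG sgG unfolding is_subgroup_def by blast
  qed
  have GM: "G \<subseteq> M"
  proof (rule ccontr)
    assume "\<not> G \<subseteq> M"
    then obtain b where bG: "b \<in> G" and bM: "b \<notin> M" by blast
    have M0: "0 \<in> M" using sgM unfolding is_subgroup_def by simp
    have Mplus: "\<And>x y. x \<in> M \<Longrightarrow> y \<in> M \<Longrightarrow> x + y \<in> M" using sgM unfolding is_subgroup_def by simp
    have Jk: "nsm (2^k) b \<in> M" using allk bG M0 by simp
    define j0 where "j0 = (LEAST j. nsm (2^j) b \<in> M)"
    have j0M: "nsm (2^j0) b \<in> M" unfolding j0_def by (rule LeastI[of _ k]) (rule Jk)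
    have j0pos: "j0 \<noteq> 0" using j0M bM by (cases j0) auto
    define b' where "b' = nsm (2^(j0-1)) b"
    have b'M: "b' \<notin> M"
    proof
      assume "b' \<in> M"
      then have "j0 \<le> j0 - 1" unfolding b'_def j0_def by (rule Least_le)
      then show False using j0pos by simp
    qed
    have b'G: "b' \<in> G" unfolding b'_def by (rule subgroup_nsm[OF sgG bG])
    have "b' + b' = nsm (2 * 2^(j0-1)) b" unfolding b'_def by (simp add: nsm_mult nsm_2)
    also have "(2::nat) * 2^(j0-1) = 2^j0" using j0pos by (cases j0) auto
    finally have b'2: "b' + b' \<in> M" using j0M by simp
    then obtain t l where tl: "b' + b' = nsm t g + l" "l \<in> L" unfolding M_def cyc_def by blast
    have "nsm (2^(k-1)) (b' + b') = nsm (2^(k-1) * 2) b'" by (simp add: nsm_mult nsm_2)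
    also have "(2::nat)^(k-1) * 2 = 2^k" using k by (cases k) auto
    finally have "nsm (2^(k-1)) (b' + b') = 0" using allk b'G by simp
    then have e0: "nsm (2^(k-1)) (nsm t g) + nsm (2^(k-1)) l = 0" using tl by (simp add: nsm_plus)
    define x where "x = nsm (2^(k-1)) (nsm t g)"
    have xc: "x \<in> cyc" unfolding x_def cyc_def by (metis nsm_mult rangeI)
    have "x = - nsm (2^(k-1)) l" using e0 unfolding x_def by (metis add_eq_0_iff2)
    moreover have "- nsm (2^(k-1)) l \<in> L" using sgL subgroup_nsm[OF sgL tl(2)] unfolding is_subgroup_def by blast
    ultimately have "x \<in> L" by simp
    then have "x = 0" using xc Lint by blast
    then have "nsm (2^(k-1) * t) g = 0" unfolding x_def by (simp add: nsm_mult)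
    then have "(2::nat)^k dvd 2^(k-1) * t" by (rule ord_dvd[OF gk k gk1])
    moreover have "(2::nat)^k = 2^(k-1) * 2" using k by (cases k) auto
    ultimately have "2 dvd t" by simp
    then obtain s where ts: "t = 2 * s" by blast
    define c where "c = b' - nsm s g"
    have sc: "nsm s g \<in> cyc" unfolding cyc_def by simp
    have cc: "c + c = l"
    proof -
      have "nsm t g = nsm s g + nsm s g" using ts by (simp add: nsm_add mult_2)
      then have "c + c = (b' + b') - nsm t g" unfolding c_def by (simp add: algebra_simps)
      then show ?thesis using tl by simp
    qed
    have cnM: "c \<notin> M"
    proof
      assume "c \<in> M"
      then have "c + nsm s g \<in> M" using Mplus sc cM by blast
      then show False using b'M unfolding c_def by simp
    qed
    have cG: "c \<in> G" unfolding c_def using subgroup_diff[OF sgG b'G] subgroup_nsm[OF sgG gG] by blast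
    define L' where "L' = L \<union> (\<lambda>y. c + y) ` L"
    have Ladd: "\<And>x y. x \<in> L \<Longrightarrow> y \<in> L \<Longrightarrow> x + y \<in> L" and Lneg: "\<And>x. x \<in> L \<Longrightarrow> - x \<in> L"
      using sgL unfolding is_subgroup_def by auto
    have sgL': "is_subgroup L'" unfolding is_subgroup_def
    proof (intro conjI ballI)
      show "0 \<in> L'" unfolding L'_def using L0 by simp
    next
      fix x y assume x: "x \<in> L'" and y: "y \<in> L'"
      show "x + y \<in> L'"
      proof (cases "x \<in> L")
        case xL: True
        show ?thesis
        proof (cases "y \<in> L")
          case True then show ?thesis unfolding L'_def using xL Ladd by blast
        next
          case False
          then obtain y1 where "y = c + y1" "y1 \<in> L" using y unfolding L'_def by blast
          then have "x + y = c + (x + y1)" "x + y1 \<in> L" using xL Ladd by (auto simp: algebra_simps)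
          then show ?thesis unfolding L'_def by blast
        qed
      next
        case xnL: False
        then obtain x1 where x1: "x = c + x1" "x1 \<in> L" using x unfolding L'_def by blast
        show ?thesis
        proof (cases "y \<in> L")
          case True
          then have "x + y = c + (x1 + y)" "x1 + y \<in> L" using x1 Ladd by (auto simp: algebra_simps)
          then show ?thesis unfolding L'_def by blast
        next
          case False
          then obtain y1 where y1: "y = c + y1" "y1 \<in> L" using y unfolding L'_def by blast
          have "x + y = (c + c) + (x1 + y1)" using x1 y1 by (simp add: algebra_simps)
          then have "x + y = l + (x1 + y1)" using cc by simp
          moreover have "l + (x1 + y1) \<in> L" using Ladd tl(2) x1 y1 by blast
          ultimately show ?thesis unfolding L'_def by simp
        qed
      qed
    next
      fix x assume x: "x \<in> L'"
      show "- x \<in> L'"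
      proof (cases "x \<in> L")
        case True then show ?thesis unfolding L'_def using Lneg by blast
      next
        case False
        then obtain x1 where x1: "x = c + x1" "x1 \<in> L" using x unfolding L'_def by blast
        have "- x = c + (- (c + c) - x1)" using x1 by (simp add: algebra_simps)
        then have "- x = c + (- l + - x1)" using cc by simp
        moreover have "- l + - x1 \<in> L" using Ladd Lneg tl(2) x1 by blast
        ultimately show ?thesis unfolding L'_def by blast
      qed
    qed
    have L'G: "L' \<subseteq> G"
    proof
      fix x assume "x \<in> L'"
      then consider "x \<in> L" | y where "y \<in> L" "x = c + y" unfolding L'_def by blast
      then show "x \<in> G"
      proof cases
        case 1 then show ?thesis using LG by blast
      next
        case 2 then show ?thesis using LG cG sgG unfolding is_subgroup_def by blast
      qed
    qed
    have L'int: "L' \<inter> cyc = {0}"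
    proof
      show "L' \<inter> cyc \<subseteq> {0}"
      proof
        fix x assume x: "x \<in> L' \<inter> cyc"
        show "x \<in> {0}"
        proof (cases "x \<in> L")
          case True then show ?thesis using x Lint by blast
        next
          case False
          then obtain y where y: "y \<in> L" "x = c + y" using x unfolding L'_def by blast
          have "c = x + (- y)" using y by simp
          moreover have "x + (- y) \<in> M" unfolding M_def using x Lneg y(1) by blast
          ultimately show ?thesis using cnM by simp
        qed
      qed
      show "{0} \<subseteq> L' \<inter> cyc" unfolding L'_def using L0 c0 by simp
    qed
    have "L' \<in> S" unfolding S_def using sgL' L'G L'int by simp
    then have le: "card L' \<le> card L" by (rule Lmax)
    have "c \<in> L'" unfolding L'_def using L0 by force
    moreover have "c \<notin> L" using cnM LM by blast
    ultimately have "L \<subset> L'" unfolding L'_def by blast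
    then have "card L < card L'" by (simp add: psubset_card_mono)
    then show False using le by simp
  qed
  have "G = M" using GM MG by blast
  then show ?thesis using sgL LG Lint unfolding M_def cyc_def by blast
qed



lemma two_group_basis:
  fixes G :: "'a::{finite,ab_group_add} set"
  assumes "is_subgroup G" "\<forall>x\<in>G. \<exists>e. nsm (2^e) x = 0"
  shows "\<exists>gs ks. is_basis gs (map (\<lambda>k. 2^k) ks) G \<and> sorted ks
           \<and> (\<forall>k\<in>set ks. 1 \<le> k \<and> (\<exists>x\<in>G. nsm (2^(k-1)) x \<noteq> 0))"
  using assms
proof (induction "card G" arbitrary: G rule: less_induct)
  case less
  note sgG = less.prems(1) and tw = less.prems(2)
  show ?case
  proof (cases "G = {0}")
    case True
    then show ?thesis using basis_empty by (intro exI[of _ "[]"]) auto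
  next
    case False
    have G0: "0 \<in> G" using sgG unfolding is_subgroup_def by simp
    obtain x0 where x0: "x0 \<in> G" "x0 \<noteq> 0" using False G0 by blast
    define e where "e x = (LEAST e. nsm (2^e) x = 0)" for x :: 'a
    have eP: "nsm (2^(e x)) x = 0" if "x \<in> G" for x
      unfolding e_def using tw that by (metis (mono_tags, lifting) LeastI)
    have emin: "e x \<le> j" if "nsm (2^j) x = 0" for x j
      unfolding e_def using that by (rule Least_le)
    have fG: "finite (e ` G)" by simp
    have neG: "e ` G \<noteq> {}" using x0 by blast
    obtain g where gG: "g \<in> G" and ge: "e g = Max (e ` G)" using Max_in[OF fG neG] by auto
    have gmax: "e x \<le> e g" if "x \<in> G" for x using Max_ge[OF fG] that ge by simp
    define k where "k = e g"
    have "e x0 \<noteq> 0"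
    proof
      assume "e x0 = 0"
      then have "nsm 1 x0 = 0" using eP[OF x0(1)] by simp
      then show False using x0 by simp
    qed
    then have k: "0 < k" using gmax[OF x0(1)] unfolding k_def by simp
    have gk: "nsm (2^k) g = 0" unfolding k_def using eP[OF gG] .
    have gk1: "nsm (2^(k-1)) g \<noteq> 0"
    proof
      assume "nsm (2^(k-1)) g = 0"
      then have "e g \<le> k - 1" by (rule emin)
      then show False using k unfolding k_def by simp
    qed
    have allk: "\<forall>x\<in>G. nsm (2^k) x = 0"
    proof
      fix x assume x: "x \<in> G"
      have "(2::nat)^(e x) dvd 2^k" using gmax[OF x] unfolding k_def by (intro le_imp_power_dvd)
      then show "nsm (2^k) x = 0" using nsm_dvd_zero eP[OF x] by blast
    qed
    obtain L where sgL: "is_subgroup L" and LG: "L \<subseteq> G" and Lint: "L \<inter> range (\<lambda>j. nsm j g) = {0}"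
      and GM: "G = {a + l | a l. a \<in> range (\<lambda>j. nsm j g) \<and> l \<in> L}"
      using complement_exists[OF sgG gG k gk gk1 allk] by blast
    have g0: "g \<noteq> 0" using gk1 by auto
    have "g \<notin> L"
    proof
      assume "g \<in> L"
      moreover have "g \<in> range (\<lambda>j. nsm j g)" by (metis nsm_1 rangeI)
      ultimately show False using Lint g0 by blast
    qed
    then have "L \<subset> G" using LG gG by blast
    then have cL: "card L < card G" by (simp add: psubset_card_mono)
    have twL: "\<forall>x\<in>L. \<exists>e. nsm (2^e) x = 0" using tw LG by blast
    obtain gsL ksL where BL: "is_basis gsL (map (\<lambda>k. 2^k) ksL) L" and sL: "sorted ksL"
      and kL: "\<forall>k\<in>set ksL. 1 \<le> k \<and> (\<exists>x\<in>L. nsm (2^(k-1)) x \<noteq> 0)"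
      using less.hyps[OF cL sgL twL] by blast
    have ordg: "nsm j g \<noteq> 0" if "0 < j" "j < 2^k" for j
    proof
      assume "nsm j g = 0"
      then have "(2::nat)^k dvd j" by (rule ord_dvd[OF gk k gk1])
      then show False using that by (simp add: nat_dvd_not_less)
    qed
    have Bc: "is_basis [g] [2^k] (range (\<lambda>j. nsm j g))"
      by (rule basis_single) (use gk ordg in auto)
    have B: "is_basis (gsL @ [g]) (map (\<lambda>k. 2^k) ksL @ [2^k])
               {a + b | a b. a \<in> L \<and> b \<in> range (\<lambda>j. nsm j g)}"
      by (rule basis_append[OF BL Bc sgL cyc_subgroup]) (use Lint in blast)
    have "{a + b | a b. a \<in> L \<and> b \<in> range (\<lambda>j. nsm j g)} = G"
      unfolding GM
    proof (intro equalityI subsetI)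
      fix x assume "x \<in> {a + b | a b. a \<in> L \<and> b \<in> range (\<lambda>j. nsm j g)}"
      then obtain a b where "x = a + b" "a \<in> L" "b \<in> range (\<lambda>j. nsm j g)" by blast
      then have "x = b + a" "a \<in> L" "b \<in> range (\<lambda>j. nsm j g)" by (simp_all add: add.commute)
      then show "x \<in> {a + l | a l. a \<in> range (\<lambda>j. nsm j g) \<and> l \<in> L}" by blast
    next
      fix x assume "x \<in> {a + l | a l. a \<in> range (\<lambda>j. nsm j g) \<and> l \<in> L}"
      then obtain a b where "x = b + a" "a \<in> L" "b \<in> range (\<lambda>j. nsm j g)" by blast
      then have "x = a + b" "a \<in> L" "b \<in> range (\<lambda>j. nsm j g)" by (simp_all add: add.commute)
      then show "x \<in> {a + b | a b. a \<in> L \<and> b \<in> range (\<lambda>j. nsm j g)}" by blast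
    qed
    then have B': "is_basis (gsL @ [g]) (map (\<lambda>k. 2^k) (ksL @ [k])) G" using B by simp
    have le: "k' \<le> k" if "k' \<in> set ksL" for k'
    proof (rule ccontr)
      assume "\<not> k' \<le> k"
      have "\<exists>x\<in>L. nsm (2^(k'-1)) x \<noteq> 0" using kL that by simp
      then obtain x where x: "x \<in> L" "nsm (2^(k'-1)) x \<noteq> 0" by blast
      have "k \<le> k' - 1" using \<open>\<not> k' \<le> k\<close> by simp
      then have "(2::nat)^k dvd 2^(k'-1)" by (rule le_imp_power_dvd)
      then have "nsm (2^(k'-1)) x = 0" using nsm_dvd_zero allk x(1) LG by blast
      then show False using x by simp
    qed
    have sorted': "sorted (ksL @ [k])" using sL le by (simp add: sorted_append)
    have prop': "\<forall>k'\<in>set (ksL @ [k]). 1 \<le> k' \<and> (\<exists>x\<in>G. nsm (2^(k'-1)) x \<noteq> 0)"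
      using kL LG k gG gk1 by auto
    show ?thesis using B' sorted' prop' by blast
  qed
qed



lemma inv_even:
  assumes "finite S" "\<forall>x\<in>S. f x \<in> S \<and> f (f x) = x \<and> f x \<noteq> x"
  shows "even (card S)"
  using assms
proof (induction "card S" arbitrary: S rule: less_induct)
  case less
  show ?case
  proof (cases "S = {}")
    case True then show ?thesis by simp
  next
    case False
    then obtain x where x: "x \<in> S" by blast
    have fx: "f x \<in> S" "f x \<noteq> x" "f (f x) = x" using less.prems(2) x by auto
    define S' where "S' = S - {x, f x}"
    have cl: "\<forall>y\<in>S'. f y \<in> S' \<and> f (f y) = y \<and> f y \<noteq> y"
    proof
      fix y assume y: "y \<in> S'"
      then have yS: "y \<in> S" "y \<noteq> x" "y \<noteq> f x" unfolding S'_def by auto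
      have fy: "f y \<in> S" "f (f y) = y" "f y \<noteq> y" using less.prems(2) yS(1) by auto
      have "f y \<noteq> x" using fy(2) yS(3) by auto
      moreover have "f y \<noteq> f x" using fy(2) yS(2) fx(3) by metis
      ultimately show "f y \<in> S' \<and> f (f y) = y \<and> f y \<noteq> y" unfolding S'_def using fy by auto
    qed
    have fin': "finite S'" unfolding S'_def using less.prems(1) by simp
    have c: "card S = card S' + 2"
    proof -
      have "{x, f x} \<subseteq> S" using x fx by auto
      then have "card S' = card S - card {x, f x}" unfolding S'_def using less.prems(1)
        by (simp add: card_Diff_subset finite_subset)
      moreover have "card {x, f x} = 2" using fx(2) by simp
      moreover have "card {x, f x} \<le> card S" using \<open>{x, f x} \<subseteq> S\<close> less.prems(1) by (rule card_mono[rotated])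
      ultimately show ?thesis by simp
    qed
    then have "card S' < card S" by simp
    then have "even (card S')" using less.hyps fin' cl by blast
    then show ?thesis using c by simp
  qed
qed

lemma pow2_odd_decomp: "0 < (n::nat) \<Longrightarrow> \<exists>e m. n = 2^e * m \<and> odd m"
proof (induction n rule: less_induct)
  case (less n)
  show ?case
  proof (cases "odd n")
    case True then show ?thesis by (intro exI[of _ 0] exI[of _ n]) auto
  next
    case False
    then obtain n' where n': "n = 2 * n'" by blast
    then have "0 < n'" "n' < n" using less.prems by auto
    then obtain e m where "n' = 2^e * m" "odd m" using less.IH by blast
    then show ?thesis using n' by (intro exI[of _ "Suc e"] exI[of _ m]) auto
  qed
qed

lemma gcd_pow2_odd: "odd (m::nat) \<Longrightarrow> gcd (2^e) m = 1"
proof -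
  assume m: "odd m"
  have "gcd (2^e) m dvd 2^e" by simp
  then obtain i where i: "i \<le> e" "gcd (2^e) m = 2^i" using divides_primepow_nat[of 2 _ e] by auto
  have "gcd (2^e) m dvd m" by simp
  then have "i = 0" using i m by (metis dvd_power dvd_trans gr0I)
  then show ?thesis using i by simp
qed

definition P2 :: "'a::ab_group_add set" where "P2 = {x. \<exists>e. nsm (2^e) x = 0}"
definition Qo :: "'a::ab_group_add set" where "Qo = {x. \<exists>m. odd m \<and> nsm m x = 0}"

lemma P2_subgroup: "is_subgroup P2"
  unfolding is_subgroup_def P2_def
proof (intro conjI ballI)
  show "0 \<in> {x::'a. \<exists>e. nsm (2^e) x = 0}" by simp
next
  fix x y :: 'a assume "x \<in> {x. \<exists>e. nsm (2^e) x = 0}" "y \<in> {x. \<exists>e. nsm (2^e) x = 0}"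
  then obtain e1 e2 where e: "nsm (2^e1) x = 0" "nsm (2^e2) y = 0" by blast
  have "nsm (2^(e1+e2)) x = 0" using nsm_dvd_zero[of "2^e1" "2^(e1+e2)" x] e by (simp add: power_add)
  moreover have "nsm (2^(e1+e2)) y = 0" using nsm_dvd_zero[of "2^e2" "2^(e1+e2)" y] e by (simp add: power_add)
  ultimately show "x + y \<in> {x. \<exists>e. nsm (2^e) x = 0}" by (intro CollectI exI[of _ "e1+e2"]) (simp add: nsm_plus)
next
  fix x :: 'a assume "x \<in> {x. \<exists>e. nsm (2^e) x = 0}"
  then show "- x \<in> {x. \<exists>e. nsm (2^e) x = 0}" by (auto simp: nsm_minus)
qed

lemma Qo_subgroup: "is_subgroup Qo"
  unfolding is_subgroup_def Qo_def
proof (intro conjI ballI)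
  show "0 \<in> {x::'a. \<exists>m. odd m \<and> nsm m x = 0}" by (intro CollectI exI[of _ 1]) simp
next
  fix x y :: 'a assume "x \<in> {x. \<exists>m. odd m \<and> nsm m x = 0}" "y \<in> {x. \<exists>m. odd m \<and> nsm m x = 0}"
  then obtain m1 m2 where e: "odd m1" "nsm m1 x = 0" "odd m2" "nsm m2 y = 0" by blast
  have "nsm (m1*m2) x = 0" using nsm_dvd_zero[of m1 "m1*m2" x] e by simp
  moreover have "nsm (m1*m2) y = 0" using nsm_dvd_zero[of m2 "m1*m2" y] e by simp
  moreover have "odd (m1*m2)" using e by simp
  ultimately show "x + y \<in> {x. \<exists>m. odd m \<and> nsm m x = 0}" by (intro CollectI exI[of _ "m1*m2"]) (simp add: nsm_plus)
next
  fix x :: 'a assume "x \<in> {x. \<exists>m. odd m \<and> nsm m x = 0}"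
  then show "- x \<in> {x. \<exists>m. odd m \<and> nsm m x = 0}" by (auto simp: nsm_minus)
qed

lemma P2_Qo_int: "P2 \<inter> Qo = {0::'a::ab_group_add}"
proof
  show "P2 \<inter> Qo \<subseteq> {0::'a}"
  proof
    fix x :: 'a assume "x \<in> P2 \<inter> Qo"
    then obtain e m where "nsm (2^e) x = 0" "odd m" "nsm m x = 0" unfolding P2_def Qo_def by blast
    then have "nsm (gcd (2^e) m) x = 0" using nsm_gcd by blast
    then show "x \<in> {0}" using gcd_pow2_odd \<open>odd m\<close> by simp
  qed
  show "{0} \<subseteq> P2 \<inter> (Qo :: 'a set)" using P2_subgroup Qo_subgroup unfolding is_subgroup_def by auto
qed

lemma P2_Qo_sum: "\<exists>p\<in>P2. \<exists>q\<in>Qo. (x::'a::{finite,ab_group_add}) = p + q"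
proof -
  obtain n where n: "0 < n" "nsm n x = 0" using exists_order by blast
  obtain e m where em: "n = 2^e * m" "odd m" using pow2_odd_decomp[OF n(1)] by blast
  define y where "y = nsm (2^e) x"
  define z where "z = nsm m x"
  have "nsm m (nsm (2^e) x) = nsm (2^e * m) x" by (simp add: nsm_mult2)
  then have yQ: "y \<in> Qo" unfolding Qo_def y_def using em n by auto
  have "nsm (2^e) (nsm m x) = nsm (2^e * m) x" by (metis nsm_mult2 mult.commute)
  then have zP: "z \<in> P2" unfolding P2_def z_def using em n by auto
  obtain a b where ab: "2^e * a = m * b + gcd (2^e) m" using bezout_nat[of "2^e" m] by auto
  then have ab': "2^e * a = m * b + 1" using gcd_pow2_odd[OF em(2)] by simp
  have "nsm a y = nsm (2^e * a) x" unfolding y_def by (simp add: nsm_mult2)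
  also have "\<dots> = nsm (m * b) x + x" using ab' by (simp add: nsm_add)
  also have "nsm (m * b) x = nsm b z" unfolding z_def by (simp add: nsm_mult2)
  finally have "x = - nsm b z + nsm a y" by (simp add: algebra_simps)
  moreover have "- nsm b z \<in> P2" using P2_subgroup subgroup_nsm[OF P2_subgroup zP] unfolding is_subgroup_def by blast
  moreover have "nsm a y \<in> Qo" using subgroup_nsm[OF Qo_subgroup yQ] .
  ultimately show ?thesis by blast
qed

lemma Qo_odd: "odd (card (Qo :: 'a::{finite,ab_group_add} set))"
proof -
  have inv: "\<forall>x\<in>Qo - {0::'a}. - x \<in> Qo - {0} \<and> - (- x) = x \<and> - x \<noteq> x"
  proof
    fix x :: 'a assume x: "x \<in> Qo - {0}"
    have "- x \<in> Qo" using x Qo_subgroup unfolding is_subgroup_def by blast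
    moreover have "- x \<noteq> x"
    proof
      assume "- x = x"
      then have "nsm 2 x = 0" by (simp add: nsm_2) (metis add_eq_0_iff2)
      moreover obtain m where "odd m" "nsm m x = 0" using x unfolding Qo_def by blast
      ultimately have "nsm (gcd 2 m) x = 0" by (intro nsm_gcd)
      then show False using gcd_pow2_odd[OF \<open>odd m\<close>, of 1] x by simp
    qed
    ultimately show "- x \<in> Qo - {0} \<and> - (- x) = x \<and> - x \<noteq> x" using x by auto
  qed
  have "even (card (Qo - {0::'a}))" by (rule inv_even[OF _ inv]) simp
  moreover have "(0::'a) \<in> Qo" using Qo_subgroup[where ?'a='a] unfolding is_subgroup_def by blast
  moreover have "card (insert (0::'a) (Qo - {0})) = Suc (card (Qo - {0::'a}))"
    by (rule card_insert_disjoint) auto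
  moreover have "insert (0::'a) (Qo - {0}) = Qo" using \<open>(0::'a) \<in> Qo\<close> by blast
  ultimately show ?thesis by (metis even_Suc)
qed

lemma even_card_with_inv:
  fixes Q :: "'a::{finite,ab_group_add} set"
  assumes "is_subgroup Q" "h \<in> Q" "h \<noteq> 0" "h + h = 0"
  shows "even (card Q)"
proof (rule inv_even[of Q "\<lambda>x. x + h"])
  show "finite Q" by simp
  show "\<forall>x\<in>Q. x + h \<in> Q \<and> x + h + h = x \<and> x + h \<noteq> x"
    using assms unfolding is_subgroup_def by (simp add: add.assoc)
qed

lemma prod_iso_of_basis:
  fixes P Q :: "'a::ab_group_add set"
  assumes B: "is_basis gs ms P" and sgP: "is_subgroup P" and sgQ: "is_subgroup Q"
    and int: "P \<inter> Q = {0}" and sum: "\<forall>x. \<exists>p\<in>P. \<exists>q\<in>Q. x = p + q"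
  shows "prod_iso ms Q (lincomb gs)"
  unfolding prod_iso_def
proof (intro conjI ballI)
  show "is_subgroup Q" by (rule sgQ)
next
  fix xs ys assume "xs \<in> zvecs ms" "ys \<in> zvecs ms"
  show "lincomb gs (zadd ms xs ys) = lincomb gs xs + lincomb gs ys"
    using B unfolding is_basis_def by (intro lincomb_zadd) auto
next
  show "bij_betw (\<lambda>(xs, q). lincomb gs xs + q) (zvecs ms \<times> Q) UNIV"
    unfolding bij_betw_def
  proof
    show "inj_on (\<lambda>(xs, q). lincomb gs xs + q) (zvecs ms \<times> Q)"
    proof (rule inj_onI, clarify)
      fix xs1 q1 xs2 q2 assume x1: "xs1 \<in> zvecs ms" "q1 \<in> Q" and x2: "xs2 \<in> zvecs ms" "q2 \<in> Q"
        and eq: "lincomb gs xs1 + q1 = lincomb gs xs2 + q2"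
      have "lincomb gs xs1 - lincomb gs xs2 = q2 - q1" using eq by (simp add: algebra_simps)
      moreover have "lincomb gs xs1 - lincomb gs xs2 \<in> P"
        using subgroup_diff[OF sgP basis_image[OF B x1(1)] basis_image[OF B x2(1)]] .
      moreover have "q2 - q1 \<in> Q" using subgroup_diff[OF sgQ x2(2) x1(2)] .
      ultimately have "q2 - q1 \<in> P \<inter> Q" by simp
      then have "q2 - q1 = 0" using int by blast
      then have "q1 = q2" "lincomb gs xs1 = lincomb gs xs2" using eq by simp_all
      then show "xs1 = xs2 \<and> q1 = q2" using basis_inj[OF B x1(1) x2(1)] by simp
    qed
    show "(\<lambda>(xs, q). lincomb gs xs + q) ` (zvecs ms \<times> Q) = UNIV"
    proof (intro equalityI subsetI)
      fix x :: 'a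
      obtain p q where pq: "p \<in> P" "q \<in> Q" "x = p + q" using sum by blast
      obtain xs where xs: "xs \<in> zvecs ms" "p = lincomb gs xs" using basis_surj[OF B pq(1)] by blast
      show "x \<in> (\<lambda>(xs, q). lincomb gs xs + q) ` (zvecs ms \<times> Q)"
        using xs pq by (intro image_eqI[of _ _ "(xs, q)"]) auto
    qed simp
  qed
qed



lemma prod_iso_hom: "prod_iso ms Q \<phi> \<Longrightarrow> xs \<in> zvecs ms \<Longrightarrow> ys \<in> zvecs ms \<Longrightarrow> \<phi> (zadd ms xs ys) = \<phi> xs + \<phi> ys"
  unfolding prod_iso_def by blast

lemma prod_iso_surj:
  assumes p: "prod_iso ms Q \<phi>" shows "\<exists>xs\<in>zvecs ms. \<exists>q\<in>Q. v = \<phi> xs + q"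
proof -
  have "v \<in> (\<lambda>(xs, q). \<phi> xs + q) ` (zvecs ms \<times> Q)" using p unfolding prod_iso_def bij_betw_def by simp
  then obtain pr where pr: "pr \<in> zvecs ms \<times> Q" "v = (\<lambda>(xs, q). \<phi> xs + q) pr" by blast
  obtain a b where "pr = (a, b)" by (cases pr)
  then show ?thesis using pr by auto
qed

lemma prod_iso_inj: "prod_iso ms Q \<phi> \<Longrightarrow> xs1 \<in> zvecs ms \<Longrightarrow> xs2 \<in> zvecs ms \<Longrightarrow> q1 \<in> Q \<Longrightarrow> q2 \<in> Q
   \<Longrightarrow> \<phi> xs1 + q1 = \<phi> xs2 + q2 \<Longrightarrow> xs1 = xs2 \<and> q1 = q2"
proof -
  assume p: "prod_iso ms Q \<phi>" and a: "xs1 \<in> zvecs ms" "xs2 \<in> zvecs ms" "q1 \<in> Q" "q2 \<in> Q"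
    and e: "\<phi> xs1 + q1 = \<phi> xs2 + q2"
  have "inj_on (\<lambda>(xs, q). \<phi> xs + q) (zvecs ms \<times> Q)" using p unfolding prod_iso_def bij_betw_def by blast
  then have "(xs1, q1) = (xs2, q2)" using a e unfolding inj_on_def by auto
  then show ?thesis by simp
qed

lemma prod_iso_Q0: "prod_iso ms Q \<phi> \<Longrightarrow> 0 \<in> Q"
  unfolding prod_iso_def is_subgroup_def by blast

lemma zeros_zvecs: "(\<forall>m\<in>set ms. 0 < m) \<Longrightarrow> replicate (length ms) 0 \<in> zvecs ms"
  unfolding zvecs_def by auto

lemma zadd_zeros: "zadd ms (replicate (length ms) 0) (replicate (length ms) 0) = replicate (length ms) 0"
  by (rule nth_equalityI) (auto simp: zadd_length zadd_nth)

lemma prod_iso_zero: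
  assumes p: "prod_iso ms Q \<phi>" and m: "\<forall>m\<in>set ms. 0 < m"
  shows "\<phi> (replicate (length ms) 0) = 0"
proof -
  let ?z = "replicate (length ms) 0"
  have "\<phi> ?z = \<phi> (zadd ms ?z ?z)" by (simp add: zadd_zeros)
  also have "\<dots> = \<phi> ?z + \<phi> ?z" using prod_iso_hom[OF p zeros_zvecs[OF m] zeros_zvecs[OF m]] .
  finally show ?thesis by simp
qed

lemma mod2_double: "(x + x) mod (2::nat) = 0" by simp

lemma case1_to_cond2:
  fixes H Q :: "'a::{finite,ab_group_add} set" and \<phi> :: "nat list \<Rightarrow> 'a"
  assumes sg: "is_subgroup H" and p: "prod_iso (replicate n 2) Q \<phi>" and oQ: "odd (card Q)" and cH: "card H = 2"
  shows "\<exists>h. h \<noteq> 0 \<and> H = {0, h} \<and> (\<forall>v. v + v \<noteq> h)"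
proof -
  have H0: "0 \<in> H" using sg unfolding is_subgroup_def by simp
  obtain x y where xy: "H = {x, y}" "x \<noteq> y" using cH by (metis card_2_iff)
  obtain h where hH: "H = {0, h}" and h0: "h \<noteq> 0" using xy H0 by auto
  have "h + h \<in> H" using sg hH unfolding is_subgroup_def by simp
  then have hh: "h + h = 0" using hH h0 by auto
  have sgQ: "is_subgroup Q" using p unfolding prod_iso_def by simp
  have "\<forall>v. v + v \<noteq> h"
  proof (intro allI notI)
    fix v assume vv: "v + v = h"
    obtain xs q where xs: "xs \<in> zvecs (replicate n 2)" and q: "q \<in> Q" and v: "v = \<phi> xs + q"
      using prod_iso_surj[OF p] by blast
    have m: "\<forall>m\<in>set (replicate n 2). 0 < (m::nat)" by simp
    have za: "zadd (replicate n 2) xs xs = replicate n 0"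
      by (rule nth_equalityI) (auto simp: zadd_length zadd_nth)
    have "v + v = \<phi> (zadd (replicate n 2) xs xs) + (q + q)"
      using prod_iso_hom[OF p xs xs] v by (simp add: algebra_simps)
    also have "\<phi> (zadd (replicate n 2) xs xs) = 0" using za prod_iso_zero[OF p m] by simp
    finally have "h = q + q" using vv by simp
    then have "h \<in> Q" using sgQ q unfolding is_subgroup_def by simp
    then have "even (card Q)" using even_card_with_inv[OF sgQ _ h0 hh] by simp
    then show False using oQ by simp
  qed
  then show ?thesis using hH h0 by blast
qed

lemma case2_to_cond2:
  fixes H Q :: "'a::{finite,ab_group_add} set" and \<phi> :: "nat list \<Rightarrow> 'a"
  assumes p: "prod_iso (replicate n 2 @ map (\<lambda>k. 2 ^ k) ks) Q \<phi>"
    and ks2: "\<forall>k\<in>set ks. k \<ge> 2"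
    and x: "length x = n" "set x \<subseteq> {0, 1}" "1 \<in> set x"
    and z: "length z = length ks" "\<forall>j<length ks. z ! j \<in> {0, 2 ^ (ks ! j - 1)}"
    and HH: "H = {0, \<phi> (x @ z)}"
  shows "\<exists>h. h \<noteq> 0 \<and> H = {0, h} \<and> (\<forall>v. v + v \<noteq> h)"
proof -
  let ?ms = "replicate n (2::nat) @ map (\<lambda>k. 2 ^ k) ks"
  have m: "\<forall>m\<in>set ?ms. 0 < (m::nat)" by auto
  have xz: "x \<in> zvecs (replicate n 2)" unfolding zvecs_def
  proof (intro CollectI conjI allI impI)
    show "length x = length (replicate n 2)" using x by simp
    fix i assume i: "i < length (replicate n 2)"
    then have "x ! i \<in> set x" using x(1) by simp
    then have "x ! i \<in> {0, 1}" using x(2) by blast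
    then show "x ! i < replicate n 2 ! i" using i by auto
  qed
  have zz: "z \<in> zvecs (map (\<lambda>k. 2 ^ k) ks)" unfolding zvecs_def
  proof (intro CollectI conjI allI impI)
    show "length z = length (map (\<lambda>k. 2 ^ k) ks)" using z by simp
    fix j assume j: "j < length (map (\<lambda>(k::nat). (2::nat) ^ k) ks)"
    then have jj: "j < length ks" by simp
    have "ks ! j \<ge> 2" using ks2 jj nth_mem by blast
    then have "(2::nat) ^ (ks ! j - 1) < 2 ^ (ks ! j)" by simp
    then show "z ! j < map (\<lambda>k. 2 ^ k) ks ! j" using z(2) jj by auto
  qed
  have lx: "length x = length (replicate n (2::nat))" using x by simp
  have az: "x @ z \<in> zvecs ?ms" using zvecs_append[OF lx] xz zz by blast
  obtain l where l: "l < n" "x ! l = 1" using x by (metis in_set_conv_nth)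
  have Q0: "0 \<in> Q" using prod_iso_Q0[OF p] .
  have lm: "length ?ms = n + length ks" by simp
  have h0: "\<phi> (x @ z) \<noteq> 0"
  proof
    assume "\<phi> (x @ z) = 0"
    then have "\<phi> (x @ z) + 0 = \<phi> (replicate (length ?ms) 0) + 0" using prod_iso_zero[OF p m] by simp
    then have "x @ z = replicate (length ?ms) 0"
      using prod_iso_inj[OF p az zeros_zvecs[OF m] Q0 Q0] by blast
    then have "(x @ z) ! l = 0" using l lm by simp
    then show False using l x by (simp add: nth_append)
  qed
  have "\<forall>v. v + v \<noteq> \<phi> (x @ z)"
  proof (intro allI notI)
    fix v assume vv: "v + v = \<phi> (x @ z)"
    obtain xs q where xs: "xs \<in> zvecs ?ms" and q: "q \<in> Q" and v: "v = \<phi> xs + q"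
      using prod_iso_surj[OF p] by blast
    have qq: "q + q \<in> Q" using p q unfolding prod_iso_def is_subgroup_def by blast
    have "v + v = \<phi> (zadd ?ms xs xs) + (q + q)"
      using prod_iso_hom[OF p xs xs] v by (simp add: algebra_simps)
    then have "\<phi> (zadd ?ms xs xs) + (q + q) = \<phi> (x @ z) + 0" using vv by simp
    then have "zadd ?ms xs xs = x @ z"
      using prod_iso_inj[OF p zadd_zvecs[OF m] az qq Q0] by blast
    then have "zadd ?ms xs xs ! l = 1" using l x by (simp add: nth_append)
    moreover have "zadd ?ms xs xs ! l = (xs ! l + xs ! l) mod 2" using l by (simp add: zadd_nth nth_append)
    ultimately show False by simp
  qed
  then show ?thesis using HH h0 by blast
qed

lemma case3_to_cond3:
  fixes H :: "'a::{finite,ab_group_add} set" and \<phi> :: "nat list \<Rightarrow> 'a"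
  assumes p: "prod_iso (replicate n 2 @ [3]) {0} \<phi>"
    and HH: "H = \<phi> ` {replicate n 0 @ [c] | c. c < 3}"
  shows "\<exists>h. h \<noteq> 0 \<and> h + h + h = 0 \<and> H = {0, h, h + h} \<and> (\<forall>u. u + u \<in> H)"
proof -
  let ?ms = "replicate n 2 @ [3::nat]"
  define e where "e c = replicate n 0 @ [c]" for c :: nat
  have m: "\<forall>m\<in>set ?ms. 0 < m" by auto
  have lm: "length ?ms = Suc n" by simp
  have ez: "e c \<in> zvecs ?ms" if "c < 3" for c
    unfolding e_def zvecs_def using that by (auto simp: nth_append)
  have eadd: "zadd ?ms (e c) (e d) = e ((c + d) mod 3)" for c d
    by (rule nth_equalityI) (auto simp: zadd_length zadd_nth e_def nth_append)
  have e0: "e 0 = replicate (length ?ms) 0" unfolding e_def by (simp add: replicate_append_same)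
  have phi0: "\<phi> (e 0) = 0" using prod_iso_zero[OF p m] e0 by simp
  define h where "h = \<phi> (e 1)"
  have n2: "(1 + 1) mod 3 = (2::nat)" "(2 + 1) mod 3 = (0::nat)" by simp_all
  have phi2: "\<phi> (e 2) = h + h" unfolding h_def using prod_iso_hom[OF p ez ez, of 1 1] eadd[of 1 1, unfolded n2] by simp
  have h3: "h + h + h = 0" using prod_iso_hom[OF p ez ez, of 2 1] eadd[of 2 1, unfolded n2] phi0 phi2 unfolding h_def by simp
  have Q0: "(0::'a) \<in> {0}" by simp
  have h0: "h \<noteq> 0"
  proof
    assume "h = 0"
    then have "\<phi> (e 1) + 0 = \<phi> (e 0) + 0" using phi0 unfolding h_def by simp
    then have "e 1 = e 0" using prod_iso_inj[OF p ez ez Q0 Q0] by simp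
    then show False unfolding e_def by simp
  qed
  have setc: "{replicate n 0 @ [c] | c. c < 3} = {e 0, e 1, e 2}"
    unfolding e_def by (auto simp: less_Suc_eq numeral_3_eq_3)
  have H': "H = {0, h, h + h}" unfolding HH setc using phi0 phi2 h_def by simp
  have "\<forall>u. u + u \<in> H"
  proof
    fix u
    obtain xs q where xs: "xs \<in> zvecs ?ms" and q: "q \<in> {0}" and u: "u = \<phi> xs + q"
      using prod_iso_surj[OF p] by blast
    have uu: "u + u = \<phi> (zadd ?ms xs xs)" using prod_iso_hom[OF p xs xs] u q by simp
    have lx: "length xs = Suc n" using zvecs_length[OF xs] by simp
    have "zadd ?ms xs xs = e ((xs ! n + xs ! n) mod 3)"
    proof (rule nth_equalityI)
      show "length (zadd ?ms xs xs) = length (e ((xs ! n + xs ! n) mod 3))"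
        by (simp add: zadd_length e_def)
      fix i assume "i < length (zadd ?ms xs xs)"
      then have i: "i < Suc n" by (simp add: zadd_length)
      show "zadd ?ms xs xs ! i = e ((xs ! n + xs ! n) mod 3) ! i"
      proof (cases "i < n")
        case True
        then show ?thesis using i by (simp add: zadd_nth e_def nth_append)
      next
        case False
        then have "i = n" using i by simp
        then show ?thesis using i by (simp add: zadd_nth e_def nth_append)
      qed
    qed
    moreover have "(xs ! n + xs ! n) mod 3 = 0 \<or> (xs ! n + xs ! n) mod 3 = 1 \<or> (xs ! n + xs ! n) mod 3 = 2"
      by arith
    ultimately have "u + u \<in> \<phi> ` {e 0, e 1, e 2}" using uu by auto
    then show "u + u \<in> H" unfolding HH setc .
  qed
  then have "h \<noteq> 0 \<and> h + h + h = 0 \<and> H = {0, h, h + h} \<and> (\<forall>u. u + u \<in> H)"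
    using h0 h3 H' by (intro conjI)
  then show ?thesis by blast
qed



lemma double_mod_pow:
  assumes x: "x < (2::nat)^k" and k: "1 \<le> k" and m: "(x + x) mod 2^k = 0"
  shows "x = 0 \<or> x = 2^(k-1)"
proof -
  have "(2::nat)^k dvd x + x" using m by (simp add: mod_eq_0_iff_dvd)
  then obtain q where q: "x + x = 2^k * q" by blast
  have kk: "(2::nat)^k = 2 * 2^(k-1)" using k by (cases k) auto
  have "2^k * q < 2^k * 2" using q x by linarith
  then have "q < 2" by simp
  then consider "q = 0" | "q = 1" by linarith
  then show ?thesis
  proof cases
    case 1 then show ?thesis using q by simp
  next
    case 2 then have "x + x = 2 * 2^(k-1)" using q kk by simp
    then show ?thesis by simp
  qed
qed

lemma cond2_to_cases:
  fixes H :: "'a::{finite,ab_group_add} set"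
  assumes sg: "is_subgroup H" and h0: "h \<noteq> 0" and HH: "H = {0, h}" and nd: "\<forall>v. v + v \<noteq> h"
  shows "(\<exists>n\<ge>1. \<exists>(Q::'a set) \<phi>. prod_iso (replicate n 2) Q \<phi> \<and> odd (card Q) \<and> card H = 2)
   \<or> (\<exists>n ks Q \<phi>. n \<ge> 1 \<and> ks \<noteq> [] \<and> (\<forall>k\<in>set ks. k \<ge> 2)
        \<and> prod_iso (replicate n 2 @ map (\<lambda>k. 2 ^ k) ks) Q \<phi> \<and> odd (card Q)
        \<and> (\<exists>x z. length x = n \<and> set x \<subseteq> {0, 1} \<and> 1 \<in> set x
              \<and> length z = length ks \<and> (\<forall>j<length ks. z ! j \<in> {0, 2 ^ (ks ! j - 1)})
              \<and> H = {0, \<phi> (x @ z)}))"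
proof -
  have "h + h \<in> H" using sg HH unfolding is_subgroup_def by simp
  then have hh: "h + h = 0" using HH h0 by auto
  have hP: "h \<in> P2" unfolding P2_def using hh by (intro CollectI exI[of _ 1]) (simp add: nsm_2)
  have tw: "\<forall>x\<in>(P2::'a set). \<exists>e. nsm (2^e) x = 0" unfolding P2_def by blast
  obtain gs ks where B: "is_basis gs (map (\<lambda>k. 2^k) ks) (P2::'a set)" and sks: "sorted ks"
    and kp: "\<forall>k\<in>set ks. 1 \<le> k \<and> (\<exists>x\<in>(P2::'a set). nsm (2^(k-1)) x \<noteq> 0)"
    using two_group_basis[OF P2_subgroup tw] by blast
  define ms where "ms = map (\<lambda>k. (2::nat)^k) ks"
  have pi: "prod_iso ms Qo (lincomb gs)" unfolding ms_def
    by (rule prod_iso_of_basis[OF B P2_subgroup Qo_subgroup P2_Qo_int]) (use P2_Qo_sum in blast)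
  have oQ: "odd (card (Qo::'a set))" by (rule Qo_odd)
  have mpos: "\<forall>m\<in>set ms. 0 < m" unfolding ms_def by auto
  have lms: "length ms = length ks" unfolding ms_def by simp
  have msi: "i < length ks \<Longrightarrow> ms ! i = 2 ^ (ks ! i)" for i unfolding ms_def by simp
  have k1: "i < length ks \<Longrightarrow> 1 \<le> ks ! i" for i using kp nth_mem by blast
  obtain a where az: "a \<in> zvecs ms" and ha: "h = lincomb gs a" using basis_surj[OF B hP] unfolding ms_def by blast
  have la: "length a = length ks" using zvecs_length[OF az] lms by simp
  have Bm: "is_basis gs ms P2" using B unfolding ms_def .
  have lg: "length gs = length ms" "\<forall>i<length ms. nsm (ms ! i) (gs ! i) = 0" using Bm unfolding is_basis_def by auto
  have claimA: "a ! i = 0 \<or> a ! i = 2 ^ (ks ! i - 1)" if i: "i < length ks" for i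
  proof -
    have "lincomb gs (zadd ms a a) = h + h" using lincomb_zadd[OF lg] ha by simp
    also have "\<dots> = lincomb gs (replicate (length ms) 0)" using hh lincomb_zeros[of gs "length ms"] lg by simp
    finally have "zadd ms a a = replicate (length ms) 0"
      using basis_inj[OF Bm zadd_zvecs[OF mpos] zeros_zvecs[OF mpos]] by blast
    then have "zadd ms a a ! i = 0" using i lms by simp
    then have m0: "(a ! i + a ! i) mod 2 ^ (ks ! i) = 0" using i lms msi by (simp add: zadd_nth)
    have lt: "a ! i < 2 ^ (ks ! i)" using zvecs_nth[OF az] i lms msi by simp
    show ?thesis using double_mod_pow[OF lt k1[OF i] m0] .
  qed
  have claimB: "\<exists>i<length ks. ks ! i = 1 \<and> a ! i = 1"
  proof (rule ccontr)
    assume nB: "\<not> (\<exists>i<length ks. ks ! i = 1 \<and> a ! i = 1)"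
    define b where "b = map (\<lambda>i. a ! i div 2) [0..<length ks]"
    have lb: "length b = length ks" unfolding b_def by simp
    have bn: "i < length ks \<Longrightarrow> b ! i = a ! i div 2" for i unfolding b_def by simp
    have bz: "b \<in> zvecs ms" unfolding zvecs_def
    proof (intro CollectI conjI allI impI)
      show "length b = length ms" using lb lms by simp
      fix i assume "i < length ms"
      then have i: "i < length ks" using lms by simp
      have "a ! i < ms ! i" using zvecs_nth[OF az] i lms by simp
      then show "b ! i < ms ! i" using bn[OF i] by simp
    qed
    have "zadd ms b b = a"
    proof (rule nth_equalityI)
      show "length (zadd ms b b) = length a" using la lms by (simp add: zadd_length)
      fix i assume "i < length (zadd ms b b)"
      then have i: "i < length ks" using lms by (simp add: zadd_length)
      have zi: "zadd ms b b ! i = (a ! i div 2 + a ! i div 2) mod 2 ^ (ks ! i)"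
        using i lms msi bn by (simp add: zadd_nth)
      show "zadd ms b b ! i = a ! i"
      proof (cases "a ! i = 0")
        case True then show ?thesis using zi by simp
      next
        case False
        then have ai: "a ! i = 2 ^ (ks ! i - 1)" using claimA[OF i] by simp
        have "ks ! i \<noteq> 1" using nB i False ai by auto
        then have k2: "2 \<le> ks ! i" using k1[OF i] by simp
        then obtain d where d: "ks ! i = 2 + d" using le_Suc_ex by blast
        then have "a ! i = 2 * 2 ^ d" using ai by simp
        then have "a ! i div 2 + a ! i div 2 = a ! i" by simp
        moreover have "a ! i < 2 ^ (ks ! i)" using zvecs_nth[OF az] i lms msi by simp
        ultimately show ?thesis using zi by simp
      qed
    qed
    moreover have "lincomb gs (zadd ms b b) = lincomb gs b + lincomb gs b" by (rule lincomb_zadd[OF lg])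
    ultimately have "h = lincomb gs b + lincomb gs b" using ha by simp
    then show False using nd by blast
  qed
  define n where "n = length (takeWhile (\<lambda>k. k = 1) ks)"
  define ks2 where "ks2 = dropWhile (\<lambda>k. k = 1) ks"
  have tw1: "takeWhile (\<lambda>k. k = 1) ks = replicate n 1"
    unfolding n_def by (rule replicate_length_same[symmetric]) (auto dest: set_takeWhileD)
  have ksd: "ks = replicate n 1 @ ks2" unfolding ks2_def using tw1 takeWhile_dropWhile_id[of "\<lambda>k. k = 1" ks] by simp
  have sks2: "sorted ks2" using sks ksd by (simp add: sorted_append)
  have ks2ge: "\<forall>k\<in>set ks2. k \<ge> 2"
  proof (cases ks2)
    case Nil then show ?thesis by simp
  next
    case (Cons k0 rest)
    have "k0 \<noteq> 1" using Cons unfolding ks2_def dropWhile_eq_Cons_conv by simp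
    moreover have "k0 \<ge> 1" using kp ksd Cons by simp
    ultimately have "k0 \<ge> 2" by simp
    moreover have "\<forall>y\<in>set rest. k0 \<le> y" using sks2 Cons by simp
    ultimately show ?thesis using Cons by auto
  qed
  obtain i where i: "i < length ks" "ks ! i = 1" "a ! i = 1" using claimB by blast
  have lks: "length ks = n + length ks2" using ksd by simp
  have in_: "i < n"
  proof (rule ccontr)
    assume "\<not> i < n"
    then have "ks ! i = ks2 ! (i - n)" using ksd by (simp add: nth_append)
    moreover have "i - n < length ks2" using i lks \<open>\<not> i < n\<close> by simp
    ultimately have "ks ! i \<in> set ks2" by simp
    then show False using ks2ge i by auto
  qed
  have n1: "n \<ge> 1" using in_ by simp
  have msd: "ms = replicate n 2 @ map (\<lambda>k. 2 ^ k) ks2" unfolding ms_def using ksd by simp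
  show ?thesis
  proof (cases "ks2 = []")
    case True
    have "prod_iso (replicate n 2) Qo (lincomb gs)" using pi msd True by simp
    moreover have "card H = 2" using HH h0 by simp
    ultimately show ?thesis using n1 oQ by blast
  next
    case False
    define x where "x = take n a"
    define z where "z = drop n a"
    have lx: "length x = n" unfolding x_def using la lks by simp
    have lz: "length z = length ks2" unfolding z_def using la lks by simp
    have xa: "j < n \<Longrightarrow> x ! j = a ! j" for j unfolding x_def by simp
    have za: "j < length ks2 \<Longrightarrow> z ! j = a ! (n + j)" for j unfolding z_def using la lks by simp
    have ksn: "j < n \<Longrightarrow> ks ! j = 1" for j using ksd by (simp add: nth_append)
    have ks2n: "j < length ks2 \<Longrightarrow> ks ! (n + j) = ks2 ! j" for j using ksd by (simp add: nth_append)
    have sx: "set x \<subseteq> {0, 1}"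
    proof
      fix y assume "y \<in> set x"
      then obtain j where j: "j < length x" "y = x ! j" by (metis in_set_conv_nth)
      then have "j < n" "j < length ks" using lx lks by auto
      then have "a ! j < 2" using zvecs_nth[OF az, of j] lms msi ksn by simp
      then show "y \<in> {0, 1}" using j xa \<open>j < n\<close> by auto
    qed
    have x1: "1 \<in> set x" using in_ i xa lx by (metis nth_mem)
    have zc: "\<forall>j<length ks2. z ! j \<in> {0, 2 ^ (ks2 ! j - 1)}"
    proof (intro allI impI)
      fix j assume j: "j < length ks2"
      have "n + j < length ks" using j lks by simp
      then have "a ! (n + j) = 0 \<or> a ! (n + j) = 2 ^ (ks ! (n + j) - 1)" by (rule claimA)
      then show "z ! j \<in> {0, 2 ^ (ks2 ! j - 1)}" using za[OF j] ks2n[OF j] by auto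
    qed
    have "x @ z = a" unfolding x_def z_def by simp
    then have HH': "H = {0, lincomb gs (x @ z)}" using HH ha by simp
    have pi2: "prod_iso (replicate n 2 @ map (\<lambda>k. 2 ^ k) ks2) Qo (lincomb gs)" using pi msd by simp
    have ex: "\<exists>x z. length x = n \<and> set x \<subseteq> {0, 1} \<and> 1 \<in> set x
              \<and> length z = length ks2 \<and> (\<forall>j<length ks2. z ! j \<in> {0, 2 ^ (ks2 ! j - 1)})
              \<and> H = {0, lincomb gs (x @ z)}"
      by (rule exI[of _ x], rule exI[of _ z]) (intro conjI lx sx x1 lz zc HH')
    have "n \<ge> 1 \<and> ks2 \<noteq> [] \<and> (\<forall>k\<in>set ks2. k \<ge> 2)
        \<and> prod_iso (replicate n 2 @ map (\<lambda>k. 2 ^ k) ks2) Qo (lincomb gs) \<and> odd (card (Qo::'a set))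
        \<and> (\<exists>x z. length x = n \<and> set x \<subseteq> {0, 1} \<and> 1 \<in> set x
              \<and> length z = length ks2 \<and> (\<forall>j<length ks2. z ! j \<in> {0, 2 ^ (ks2 ! j - 1)})
              \<and> H = {0, lincomb gs (x @ z)})"
      using n1 False ks2ge oQ pi2 ex by (intro conjI)
    then show ?thesis by (intro disjI2 exI[of _ n] exI[of _ ks2] exI[of _ Qo] exI[of _ "lincomb gs"])
  qed
qed



lemma cond3_to_case3:
  fixes H :: "'a::{finite,ab_group_add} set"
  assumes h0: "h \<noteq> 0" and h3: "h + h + h = 0" and HH: "H = {0, h, h + h}" and all: "\<forall>u. u + u \<in> H"
  shows "\<exists>n \<phi>. prod_iso (replicate n 2 @ [3]) {0} \<phi> \<and> H = \<phi> ` {replicate n 0 @ [c] | c. c < 3}"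
proof -
  define T where "T = {w::'a. w + w = 0}"
  have sgT: "is_subgroup T" unfolding is_subgroup_def T_def
  proof (intro conjI ballI)
    show "(0::'a) \<in> {w. w + w = 0}" by simp
  next
    fix x y :: 'a assume "x \<in> {w. w + w = 0}" "y \<in> {w. w + w = 0}"
    then have "x + x = 0" "y + y = 0" by auto
    moreover have "(x + y) + (x + y) = (x + x) + (y + y)" by (simp add: algebra_simps)
    ultimately show "x + y \<in> {w. w + w = 0}" by simp
  next
    fix x :: 'a assume "x \<in> {w. w + w = 0}"
    then have "x + x = 0" by auto
    moreover have "(- x) + (- x) = - (x + x)" by (simp add: algebra_simps)
    ultimately show "- x \<in> {w. w + w = 0}" by simp
  qed
  have tw: "\<forall>x\<in>T. \<exists>e. nsm (2^e) x = 0" unfolding T_def by (auto intro!: exI[of _ 1] simp: nsm_2)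
  obtain gs ks where BT0: "is_basis gs (map (\<lambda>k. 2^k) ks) T"
    and kp: "\<forall>k\<in>set ks. 1 \<le> k \<and> (\<exists>x\<in>T. nsm (2^(k-1)) x \<noteq> 0)"
    using two_group_basis[OF sgT tw] by blast
  have kone: "\<forall>k\<in>set ks. k = 1"
  proof
    fix k assume k: "k \<in> set ks"
    have "\<exists>x\<in>T. nsm (2^(k-1)) x \<noteq> 0" using kp k by simp
    then obtain x where x: "x \<in> T" "nsm (2^(k-1)) x \<noteq> 0" by blast
    have k1: "1 \<le> k" using kp k by simp
    show "k = 1"
    proof (rule ccontr)
      assume "k \<noteq> 1"
      then have "1 \<le> k - 1" using k1 by simp
      then have "(2::nat)^1 dvd 2^(k-1)" by (rule le_imp_power_dvd)
      then have d: "(2::nat) dvd 2^(k-1)" by simp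
      moreover have "nsm 2 x = 0" using x(1) unfolding T_def by (simp add: nsm_2)
      ultimately have "nsm (2^(k-1)) x = 0" by (rule nsm_dvd_zero)
      then show False using x by simp
    qed
  qed
  define n where "n = length ks"
  have ksr: "ks = replicate n 1" unfolding n_def using kone by (simp add: replicate_length_same)
  have BT: "is_basis gs (replicate n 2) T" using BT0 ksr by simp
  have lg: "length gs = n" using BT unfolding is_basis_def by simp
  have hh0: "h + h \<noteq> 0"
  proof
    assume a: "h + h = 0"
    have "h + h + h = h" using a by simp
    then show False using h3 h0 by simp
  qed
  have "(h + h) + (h + h) = (h + h + h) + h" by (simp add: add.assoc)
  then have X1: "(h + h) + (h + h) = h" using h3 by simp
  have n3: "nsm 3 h = 0" using h3 by (simp add: numeral_3_eq_3 add.assoc)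
  have n2: "nsm 2 h = h + h" by (simp add: nsm_2)
  have ordh: "nsm j h \<noteq> 0" if "0 < j" "j < 3" for j
  proof -
    have "j = 1 \<or> j = 2" using that by linarith
    then show ?thesis using h0 hh0 n2 by auto
  qed
  have BH: "is_basis [h] [3] (range (\<lambda>j. nsm j h))" by (rule basis_single) (use n3 ordh in auto)
  have cycH: "range (\<lambda>j. nsm j h) = H"
  proof (intro equalityI subsetI)
    fix x assume "x \<in> range (\<lambda>j. nsm j h)"
    then obtain j where j: "x = nsm j h" by blast
    have "x = nsm (j mod 3) h" using j nsm_mod[OF n3] by simp
    moreover have "j mod 3 = 0 \<or> j mod 3 = 1 \<or> j mod 3 = 2" by arith
    ultimately show "x \<in> H" unfolding HH using n2 by auto
  next
    fix x assume "x \<in> H"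
    then have "x = nsm 0 h \<or> x = nsm 1 h \<or> x = nsm 2 h" unfolding HH using n2 by auto
    then show "x \<in> range (\<lambda>j. nsm j h)" by blast
  qed
  have int: "T \<inter> range (\<lambda>j. nsm j h) = {0}"
  proof
    show "T \<inter> range (\<lambda>j. nsm j h) \<subseteq> {0}"
    proof
      fix x assume x: "x \<in> T \<inter> range (\<lambda>j. nsm j h)"
      then have "x \<in> H" "x + x = 0" using cycH unfolding T_def by auto
      then show "x \<in> {0}" unfolding HH using hh0 h0 by (auto simp: X1)
    qed
    show "{0} \<subseteq> T \<inter> range (\<lambda>j. nsm j h)" unfolding T_def by (auto intro: range_eqI[of _ _ 0])
  qed
  have B: "is_basis (gs @ [h]) (replicate n 2 @ [3]) {a + b | a b. a \<in> T \<and> b \<in> range (\<lambda>j. nsm j h)}"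
    by (rule basis_append[OF BT BH sgT cyc_subgroup int])
  have sumall: "\<forall>x. \<exists>p\<in>{a + b | a b. a \<in> T \<and> b \<in> range (\<lambda>j. nsm j h)}. \<exists>q\<in>{0}. x = p + q"
  proof
    fix u :: 'a
    have uu: "u + u = 0 \<or> u + u = h \<or> u + u = h + h" using all HH by auto
    have "\<exists>a b. u = a + b \<and> a + a = 0 \<and> b \<in> H"
    proof -
      consider "u + u = 0" | "u + u = h" | "u + u = h + h" using uu by blast
      then show ?thesis
      proof cases
        case 1 then show ?thesis using HH by (intro exI[of _ u] exI[of _ 0]) auto
      next
        case 2
        have e1: "(u + h) + (h + h) = u + (h + h + h)" by (simp add: algebra_simps)
        have e2: "(u + h) + (u + h) = (u + u) + (h + h)" by (simp add: algebra_simps)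
        show ?thesis using HH e1 e2 2 h3 by (intro exI[of _ "u + h"] exI[of _ "h + h"]) auto
      next
        case 3
        have e1: "(u + h + h) + h = u + (h + h + h)" by (simp add: algebra_simps)
        have e2: "(u + h + h) + (u + h + h) = (u + u) + ((h + h) + (h + h))" by (simp add: algebra_simps)
        have e3: "(h + h) + h = 0" using h3 by simp
        show ?thesis using HH e1 e2 3 h3 X1 e3 by (intro exI[of _ "u + h + h"] exI[of _ h]) auto
      qed
    qed
    then obtain a b where ab: "u = a + b" "a + a = 0" "b \<in> H" by blast
    then have "a + b \<in> {a + b | a b. a \<in> T \<and> b \<in> range (\<lambda>j. nsm j h)}" using cycH unfolding T_def by blast
    then show "\<exists>p\<in>{a + b | a b. a \<in> T \<and> b \<in> range (\<lambda>j. nsm j h)}. \<exists>q\<in>{0}. u = p + q"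
      using ab by auto
  qed
  have sgU: "is_subgroup {a + b | a b. a \<in> T \<and> b \<in> range (\<lambda>j. nsm j h)}"
    by (rule sum_subgroup[OF sgT cyc_subgroup])
  have sg0: "is_subgroup {0::'a}" unfolding is_subgroup_def by simp
  have int0: "{a + b | a b. a \<in> T \<and> b \<in> range (\<lambda>j. nsm j h)} \<inter> {0} = {0}"
    using sgU unfolding is_subgroup_def by blast
  have pi: "prod_iso (replicate n 2 @ [3]) {0} (lincomb (gs @ [h]))"
    by (rule prod_iso_of_basis[OF B sgU sg0 int0 sumall])
  have lc: "lincomb (gs @ [h]) (replicate n 0 @ [c]) = nsm c h" for c
  proof -
    have "length (replicate n 0) = length gs" using lg by simp
    then have "lincomb (gs @ [h]) (replicate n 0 @ [c]) = lincomb gs (replicate n 0) + lincomb [h] [c]"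
      by (rule lincomb_append)
    then show ?thesis using lincomb_zeros[of gs n] lg by (simp add: lincomb_single)
  qed
  have "lincomb (gs @ [h]) ` {replicate n 0 @ [c] | c. c < 3} = {nsm c h | c. c < 3}"
  proof (intro equalityI subsetI)
    fix x assume "x \<in> lincomb (gs @ [h]) ` {replicate n 0 @ [c] | c. c < 3}"
    then obtain c where "c < 3" "x = lincomb (gs @ [h]) (replicate n 0 @ [c])" by blast
    then show "x \<in> {nsm c h | c. c < 3}" using lc by auto
  next
    fix x assume "x \<in> {nsm c h | c. c < 3}"
    then obtain c where c: "c < 3" "x = nsm c h" by blast
    then have "x = lincomb (gs @ [h]) (replicate n 0 @ [c])" using lc by simp
    then show "x \<in> lincomb (gs @ [h]) ` {replicate n 0 @ [c] | c. c < 3}" using c(1) by blast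
  qed
  also have "\<dots> = H"
  proof (intro equalityI subsetI)
    fix x assume "x \<in> {nsm c h | c. c < 3}"
    then obtain c where c: "x = nsm c h" "c < 3" by blast
    then have "c = 0 \<or> c = 1 \<or> c = 2" by arith
    then show "x \<in> H" unfolding HH using c n2 by auto
  next
    fix x assume "x \<in> H"
    then have "x = nsm 0 h \<or> x = nsm 1 h \<or> x = nsm 2 h" unfolding HH using n2 by auto
    then show "x \<in> {nsm c h | c. c < 3}"
    proof (elim disjE)
      assume a: "x = nsm 0 h" show ?thesis by (rule CollectI, rule exI[of _ 0]) (simp add: a)
    next
      assume a: "x = nsm 1 h" show ?thesis by (rule CollectI, rule exI[of _ 1]) (simp add: a)
    next
      assume a: "x = nsm 2 h" show ?thesis by (rule CollectI, rule exI[of _ 2]) (simp add: a)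
    qed
  qed
  finally show ?thesis using pi by blast
qed



lemma theorem5p4_aux:
  fixes H :: "'a::{finite, ab_group_add} set"
  assumes "is_subgroup H"
  shows "(\<exists>C. total_perfect_code H C) \<longleftrightarrow>
    ((\<exists>n\<ge>1. \<exists>(Q::'a set) \<phi>. prod_iso (replicate n 2) Q \<phi> \<and> odd (card Q) \<and> card H = 2)
   \<or> (\<exists>n ks Q \<phi>. n \<ge> 1 \<and> ks \<noteq> [] \<and> (\<forall>k\<in>set ks. k \<ge> 2)
        \<and> prod_iso (replicate n 2 @ map (\<lambda>k. 2 ^ k) ks) Q \<phi> \<and> odd (card Q)
        \<and> (\<exists>x z. length x = n \<and> set x \<subseteq> {0, 1} \<and> 1 \<in> set x
              \<and> length z = length ks \<and> (\<forall>j<length ks. z ! j \<in> {0, 2 ^ (ks ! j - 1)})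
              \<and> H = {0, \<phi> (x @ z)}))
   \<or> (\<exists>n \<phi>. prod_iso (replicate n 2 @ [3]) {0} \<phi>
        \<and> H = \<phi> ` {replicate n 0 @ [c] | c. c < 3}))" (is "_ \<longleftrightarrow> ?A \<or> ?B \<or> ?C")
proof
  assume "\<exists>C. total_perfect_code H C"
  then obtain C where C: "total_perfect_code H C" by blast
  from code_forward[OF assms C] show "?A \<or> ?B \<or> ?C"
  proof (elim disjE exE conjE)
    fix h assume "h \<noteq> 0" "H = {0, h}" "\<forall>v. v + v \<noteq> h"
    then have "?A \<or> ?B" by (rule cond2_to_cases[OF assms])
    then show ?thesis by blast
  next
    fix h assume "h \<noteq> 0" "h + h + h = 0" "H = {0, h, h + h}" "\<forall>u. u + u \<in> H"
    then have ?C by (rule cond3_to_case3)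
    then show ?thesis by blast
  qed
next
  assume "?A \<or> ?B \<or> ?C"
  then show "\<exists>C. total_perfect_code H C"
  proof (elim disjE)
    assume ?A
    then obtain n and Q :: "'a set" and \<phi> :: "nat list \<Rightarrow> 'a" where "prod_iso (replicate n 2) Q \<phi>" "odd (card Q)" "card H = 2" by blast
    then obtain h where "h \<noteq> 0" "H = {0, h}" "\<forall>v. v + v \<noteq> h" using case1_to_cond2[OF assms] by blast
    then show ?thesis using code_cond2 by blast
  next
    assume ?B
    then obtain n ks and Q :: "'a set" and \<phi> :: "nat list \<Rightarrow> 'a" and x z where p: "prod_iso (replicate n 2 @ map (\<lambda>k. 2 ^ k) ks) Q \<phi>"
      and k2: "\<forall>k\<in>set ks. k \<ge> 2"
      and x: "length x = n" "set x \<subseteq> {0, 1}" "1 \<in> set x"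
      and z: "length z = length ks" "\<forall>j<length ks. z ! j \<in> {0, 2 ^ (ks ! j - 1)}"
      and HH: "H = {0, \<phi> (x @ z)}" by blast
    obtain h where "h \<noteq> 0" "H = {0, h}" "\<forall>v. v + v \<noteq> h" using case2_to_cond2[OF p k2 x z HH] by blast
    then show ?thesis using code_cond2 by blast
  next
    assume ?C
    then obtain n and \<phi> :: "nat list \<Rightarrow> 'a" where p3: "prod_iso (replicate n 2 @ [3]) {0} \<phi>" and H3: "H = \<phi> ` {replicate n 0 @ [c] | c. c < 3}"
      by blast
    obtain h where "h \<noteq> 0" "h + h + h = 0" "H = {0, h, h + h}" "\<forall>u. u + u \<in> H"
      using case3_to_cond3[OF p3 H3] by blast
    then have "total_perfect_code H {u. u + u = 0 \<or> u + u = h + h}" by (rule code_cond3)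
    then show ?thesis by blast
  qed
qed

theorem theorem5p4:
  fixes H :: "'a::{finite, ab_group_add} set"
  assumes "is_subgroup H"
  shows "(\<exists>C. total_perfect_code H C) \<longleftrightarrow>
    ((\<exists>n\<ge>1. \<exists>(Q::'a set) \<phi>. prod_iso (replicate n 2) Q \<phi> \<and> odd (card Q) \<and> card H = 2)
   \<or> (\<exists>n ks Q \<phi>. n \<ge> 1 \<and> ks \<noteq> [] \<and> (\<forall>k\<in>set ks. k \<ge> 2)
        \<and> prod_iso (replicate n 2 @ map (\<lambda>k. 2 ^ k) ks) Q \<phi> \<and> odd (card Q)
        \<and> (\<exists>x z. length x = n \<and> set x \<subseteq> {0, 1} \<and> 1 \<in> set x
              \<and> length z = length ks \<and> (\<forall>j<length ks. z ! j \<in> {0, 2 ^ (ks ! j - 1)})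
              \<and> H = {0, \<phi> (x @ z)}))
   \<or> (\<exists>n \<phi>. prod_iso (replicate n 2 @ [3]) {0} \<phi>
        \<and> H = \<phi> ` {replicate n 0 @ [c] | c. c < 3}))"
  using assms by (rule theorem5p4_aux)

end
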